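(* Let $R_\alpha=X^\alpha+X^{(\rho,\alpha^\vee)\alpha}B_\alpha$ for $\alpha\in\Phi$. Then for every $i\in\{1,\dots,r\}$ and $\beta\in\Phi$: (a) $R_{\alpha_i}T_i=T_iR_{-\alpha_i}+R_{\alpha_i}$; (b) $R_{-\alpha_i}T_i=T_iR_{\alpha_i}-R_{\alpha_i}$; (c) $R_\beta T_i=T_iR_{-\alpha_i}R_{s_i(\beta)}R_{\alpha_i}$ if $\beta\ne\pm\alpha_i$.
   Context: $G$ connected, simply connected, simple complex Lie group, Borel $B\supset T$, irreducible root system $\Phi$, positive roots $\Phi^+$, simple roots $\alpha_1,\dots,\alpha_r$, coroots $\alpha^\vee=2\alpha/(\alpha,\alpha)$, Weyl group $W$ with length $\ell$ and simple reflections $s_i$, weight lattice $\Lambda$, $\rho$ the sum of fundamental weights, $\theta^\vee$ the highest coroot, $h=(\rho,\theta^\vee)+1$. $K_T(G/B)$ is a free $\mathbb Z[X]$-module ($\mathbb Z[X]$ = group algebra of $\Lambda$) with basis $[\mathcal O_w]:=*[\mathcal O_{X_w}]$, $w\in W$. $\mathbb Z[\tilde X]$ is the group algebra of $\Lambda/h$ (basis $x^{\lambda/h}$) and $\tilde K_T(G/B)=K_T(G/B)\otimes_{\mathbb Z[X]}\mathbb Z[\tilde X]$ with basis $[\mathcal O_w]$. All operators below are $\mathbb Z[\tilde X]$-linear on $\tilde K_T(G/B)$: for $\alpha\in\Phi^+$, $B_\alpha[\mathcal O_w]=[\mathcal O_{ws_\alpha}]$ if $\ell(ws_\alpha)=\ell(w)-1$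 and $0$ otherwise, $B_{-\alpha}:=-B_\alpha$; $X^\lambda[\mathcal O_w]=x^{w(\lambda)/h}[\mathcal O_w]$; the Demazure operator $T_i$ acts by $T_i[\mathcal O_w]=[\mathcal O_{ws_i}]$ if $\ell(ws_i)=\ell(w)+1$ and $T_i[\mathcal O_w]=[\mathcal O_w]$ if $\ell(ws_i)=\ell(w)-1$ (this is the operator induced by $f\mapsto(f-e^{-\alpha_i}s_i(f))/(1-e^{-\alpha_i})$). *)

theory Defs
  imports "HOL-Analysis.Analysis" "HOL-Library.Poly_Mapping" "HOL-Library.Function_Algebras"
begin

definition coroot :: "'a::real_inner \<Rightarrow> 'a" where
  "coroot \<alpha> = (2 / (\<alpha> \<bullet> \<alpha>)) *\<^sub>R \<alpha>"

definition sref :: "'a::real_inner \<Rightarrow> 'a \<Rightarrow> 'a" where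
  "sref \<alpha> v = v - (v \<bullet> coroot \<alpha>) *\<^sub>R \<alpha>"

definition root_system :: "'a::euclidean_space set \<Rightarrow> bool" where
  "root_system \<Phi> \<longleftrightarrow> finite \<Phi> \<and> 0 \<notin> \<Phi> \<and> span \<Phi> = UNIV
     \<and> (\<forall>\<alpha>\<in>\<Phi>. sref \<alpha> ` \<Phi> = \<Phi>)
     \<and> (\<forall>\<alpha>\<in>\<Phi>. \<forall>\<beta>\<in>\<Phi>. \<beta> \<bullet> coroot \<alpha> \<in> \<int>)
     \<and> (\<forall>\<alpha>\<in>\<Phi>. \<forall>c::real. c *\<^sub>R \<alpha> \<in> \<Phi> \<longrightarrow> c = 1 \<or> c = -1)"

definition irreducible_rs :: "'a::euclidean_space set \<Rightarrow> bool" where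
  "irreducible_rs \<Phi> \<longleftrightarrow> \<Phi> \<noteq> {} \<and>
     \<not> (\<exists>\<Phi>1 \<Phi>2. \<Phi>1 \<noteq> {} \<and> \<Phi>2 \<noteq> {} \<and> \<Phi> = \<Phi>1 \<union> \<Phi>2
        \<and> (\<forall>\<alpha>\<in>\<Phi>1. \<forall>\<beta>\<in>\<Phi>2. \<alpha> \<bullet> \<beta> = 0))"

definition is_base :: "'a::euclidean_space set \<Rightarrow> (nat \<Rightarrow> 'a) \<Rightarrow> nat \<Rightarrow> bool" where
  "is_base \<Phi> \<alpha> r \<longleftrightarrow> (\<forall>i\<in>{1..r}. \<alpha> i \<in> \<Phi>) \<and> inj_on \<alpha> {1..r}
     \<and> independent (\<alpha> ` {1..r})
     \<and> (\<forall>\<beta>\<in>\<Phi>. \<exists>k::nat \<Rightarrow> int. \<beta> = (\<Sum>i=1..r. of_int (k i) *\<^sub>R \<alpha> i)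
           \<and> ((\<forall>i\<in>{1..r}. k i \<ge> 0) \<or> (\<forall>i\<in>{1..r}. k i \<le> 0)))"

definition pos_roots :: "'a::euclidean_space set \<Rightarrow> (nat \<Rightarrow> 'a) \<Rightarrow> nat \<Rightarrow> 'a set" where
  "pos_roots \<Phi> \<alpha> r = {\<beta>\<in>\<Phi>. \<exists>k::nat \<Rightarrow> int. \<beta> = (\<Sum>i=1..r. of_int (k i) *\<^sub>R \<alpha> i)
           \<and> (\<forall>i\<in>{1..r}. k i \<ge> 0)}"

inductive_set weyl_group :: "'a::euclidean_space set \<Rightarrow> ('a \<Rightarrow> 'a) set" for \<Phi> where
  id_in: "id \<in> weyl_group \<Phi>"
| refl_in: "w \<in> weyl_group \<Phi> \<Longrightarrow> \<beta> \<in> \<Phi> \<Longrightarrow> w \<circ> sref \<beta> \<in> weyl_group \<Phi>"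

definition simple_word :: "(nat \<Rightarrow> 'a::real_inner) \<Rightarrow> nat list \<Rightarrow> 'a \<Rightarrow> 'a" where
  "simple_word \<alpha> is = foldr (\<lambda>i w. sref (\<alpha> i) \<circ> w) is id"

definition weyl_length :: "(nat \<Rightarrow> 'a::real_inner) \<Rightarrow> nat \<Rightarrow> ('a \<Rightarrow> 'a) \<Rightarrow> nat" where
  "weyl_length \<alpha> r w = (LEAST n. \<exists>is. length is = n \<and> set is \<subseteq> {1..r} \<and> w = simple_word \<alpha> is)"

definition fund_weight :: "(nat \<Rightarrow> 'a::euclidean_space) \<Rightarrow> nat \<Rightarrow> nat \<Rightarrow> 'a" where
  "fund_weight \<alpha> r i = (THE \<omega>. \<forall>j\<in>{1..r}. \<omega> \<bullet> coroot (\<alpha> j) = (if i = j then 1 else 0))"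

definition rho :: "(nat \<Rightarrow> 'a::euclidean_space) \<Rightarrow> nat \<Rightarrow> 'a" where
  "rho \<alpha> r = (\<Sum>i=1..r. fund_weight \<alpha> r i)"

definition highest_coroot :: "'a::euclidean_space set \<Rightarrow> (nat \<Rightarrow> 'a) \<Rightarrow> nat \<Rightarrow> 'a" where
  "highest_coroot \<Phi> \<alpha> r = (THE t. t \<in> coroot ` \<Phi> \<and>
     (\<forall>\<beta>\<in>\<Phi>. \<exists>k::nat \<Rightarrow> int. (\<forall>i\<in>{1..r}. k i \<ge> 0)
        \<and> t - coroot \<beta> = (\<Sum>i=1..r. of_int (k i) *\<^sub>R coroot (\<alpha> i))))"

definition coxeter_number :: "'a::euclidean_space set \<Rightarrow> (nat \<Rightarrow> 'a) \<Rightarrow> nat \<Rightarrow> real" where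
  "coxeter_number \<Phi> \<alpha> r = rho \<alpha> r \<bullet> highest_coroot \<Phi> \<alpha> r + 1"

text \<open>Coefficient ring: group algebra, monomial \<open>x^\<mu>\<close> = \<open>Poly_Mapping.single \<mu> 1\<close>;
  the ring \<open>Z[X~]\<close> (exponents in \<open>\<Lambda>/h\<close>) is a subring of this.\<close>
type_synonym 'a coeff = "'a \<Rightarrow>\<^sub>0 int"

definition xmon :: "'a \<Rightarrow> 'a coeff" where
  "xmon \<mu> = Poly_Mapping.single \<mu> 1"

text \<open>Elements of the module: coefficient functions \<open>F\<close>, i.e. \<open>\<Sum>_{w\<in>W} F w [O_w]\<close>.\<close>
type_synonym 'a kmod = "('a \<Rightarrow> 'a) \<Rightarrow> 'a coeff"

definition cbasis :: "'a coeff \<Rightarrow> ('a \<Rightarrow> 'a) \<Rightarrow> 'a kmod" where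
  "cbasis c v = (\<lambda>u. if u = v then c else 0)"

definition lin_ext :: "'a::euclidean_space set \<Rightarrow> (('a \<Rightarrow> 'a) \<Rightarrow> 'a kmod) \<Rightarrow> 'a kmod \<Rightarrow> 'a kmod" where
  "lin_ext \<Phi> act F = (\<lambda>u. \<Sum>w\<in>weyl_group \<Phi>. F w * act w u)"

definition Bpos :: "'a::euclidean_space set \<Rightarrow> (nat \<Rightarrow> 'a) \<Rightarrow> nat \<Rightarrow> 'a \<Rightarrow> 'a kmod \<Rightarrow> 'a kmod" where
  "Bpos \<Phi> \<alpha> r \<gamma> = lin_ext \<Phi> (\<lambda>w.
     if weyl_length \<alpha> r (w \<circ> sref \<gamma>) + 1 = weyl_length \<alpha> r w
     then cbasis 1 (w \<circ> sref \<gamma>) else (\<lambda>_. 0))"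

definition Bop :: "'a::euclidean_space set \<Rightarrow> (nat \<Rightarrow> 'a) \<Rightarrow> nat \<Rightarrow> 'a \<Rightarrow> 'a kmod \<Rightarrow> 'a kmod" where
  "Bop \<Phi> \<alpha> r \<beta> = (if \<beta> \<in> pos_roots \<Phi> \<alpha> r then Bpos \<Phi> \<alpha> r \<beta> else - Bpos \<Phi> \<alpha> r (- \<beta>))"

definition Xop :: "'a::euclidean_space set \<Rightarrow> (nat \<Rightarrow> 'a) \<Rightarrow> nat \<Rightarrow> 'a \<Rightarrow> 'a kmod \<Rightarrow> 'a kmod" where
  "Xop \<Phi> \<alpha> r \<mu> = lin_ext \<Phi> (\<lambda>w.
     cbasis (xmon ((1 / coxeter_number \<Phi> \<alpha> r) *\<^sub>R w \<mu>)) w)"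

definition Top :: "'a::euclidean_space set \<Rightarrow> (nat \<Rightarrow> 'a) \<Rightarrow> nat \<Rightarrow> nat \<Rightarrow> 'a kmod \<Rightarrow> 'a kmod" where
  "Top \<Phi> \<alpha> r i = lin_ext \<Phi> (\<lambda>w.
     if weyl_length \<alpha> r (w \<circ> sref (\<alpha> i)) = weyl_length \<alpha> r w + 1
     then cbasis 1 (w \<circ> sref (\<alpha> i))
     else if weyl_length \<alpha> r (w \<circ> sref (\<alpha> i)) + 1 = weyl_length \<alpha> r w
     then cbasis 1 w else (\<lambda>_. 0))"

definition Rop :: "'a::euclidean_space set \<Rightarrow> (nat \<Rightarrow> 'a) \<Rightarrow> nat \<Rightarrow> 'a \<Rightarrow> 'a kmod \<Rightarrow> 'a kmod" where
  "Rop \<Phi> \<alpha> r \<beta> = Xop \<Phi> \<alpha> r \<beta>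
     + (Xop \<Phi> \<alpha> r ((rho \<alpha> r \<bullet> coroot \<beta>) *\<^sub>R \<beta>) \<circ> Bop \<Phi> \<alpha> r \<beta>)"

end

theory Submission imports Defs begin

section \<open>Vector lemmas\<close>

lemma coroot_neg[simp]: "coroot (- a) = - coroot (a::'a::real_inner)"
  by (simp add: coroot_def)

lemma sref_neg[simp]: "sref (- a) = sref (a::'a::real_inner)"
  by (auto simp: sref_def coroot_def fun_eq_iff)

lemma linear_sref: "linear (sref (a::'a::real_inner))"
  by (rule linearI) (auto simp: sref_def inner_add_left algebra_simps)

lemma sref_self: "(a::'a::real_inner) \<noteq> 0 \<Longrightarrow> sref a a = - a"
  by (simp add: sref_def coroot_def scaleR_2)

lemma sref_sref[simp]: "(a::'a::real_inner) \<noteq> 0 \<Longrightarrow> sref a (sref a x) = x"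
  by (simp add: sref_def coroot_def inner_diff_left algebra_simps)

lemma sref_comp_sref: "(a::'a::real_inner) \<noteq> 0 \<Longrightarrow> sref a \<circ> sref a = id"
  by (auto simp: fun_eq_iff)

lemma sref_inner: "(a::'a::real_inner) \<noteq> 0 \<Longrightarrow> sref a x \<bullet> sref a y = x \<bullet> y"
  by (simp add: sref_def coroot_def inner_diff_left inner_diff_right algebra_simps inner_commute)

definition orth :: "('a::real_inner \<Rightarrow> 'a) \<Rightarrow> bool" where
  "orth w \<longleftrightarrow> linear w \<and> (\<forall>x y. w x \<bullet> w y = x \<bullet> y)"

lemma orth_id: "orth id" by (simp add: orth_def linear_id)

lemma orth_sref: "(a::'a::real_inner) \<noteq> 0 \<Longrightarrow> orth (sref a)"
  by (simp add: orth_def linear_sref sref_inner)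

lemma orth_comp: "orth f \<Longrightarrow> orth g \<Longrightarrow> orth (f \<circ> g)"
  by (auto simp: orth_def linear_compose)

lemma orth_linear: "orth w \<Longrightarrow> linear w" by (simp add: orth_def)

lemma orth_inner: "orth w \<Longrightarrow> w x \<bullet> w y = x \<bullet> y" by (simp add: orth_def)

lemma orth_coroot: "orth w \<Longrightarrow> coroot (w a) = w (coroot a)"
  by (simp add: coroot_def orth_inner linear_cmul[OF orth_linear])

lemma orth_conj: "orth w \<Longrightarrow> w \<circ> sref a = sref (w a) \<circ> w"
proof -
  assume o: "orth w"
  note l = orth_linear[OF o]
  show ?thesis
    by (auto simp: fun_eq_iff sref_def orth_coroot[OF o] orth_inner[OF o]
          linear_diff[OF l] linear_cmul[OF l])
qed

lemma sref_conj:
  assumes "(a::'a::real_inner) \<noteq> 0" shows "sref (sref a b) = sref a \<circ> sref b \<circ> sref a"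
proof -
  have "sref a \<circ> sref b = sref (sref a b) \<circ> sref a"
    by (rule orth_conj[OF orth_sref[OF assms]])
  hence "sref a \<circ> sref b \<circ> sref a = sref (sref a b) \<circ> (sref a \<circ> sref a)"
    by (simp add: comp_assoc)
  thus ?thesis using sref_comp_sref[OF assms] by simp
qed

section \<open>Module generic\<close>

lemma lin_ext_add: "lin_ext \<Phi> A (F + G) = lin_ext \<Phi> A F + lin_ext \<Phi> A G"
  by (simp add: lin_ext_def fun_eq_iff distrib_right sum.distrib)

lemma lin_ext_neg: "lin_ext \<Phi> A (- F) = - lin_ext \<Phi> A F"
  by (simp add: lin_ext_def fun_eq_iff sum_negf)

lemma lin_ext_zero: "lin_ext \<Phi> A 0 = 0"
  by (simp add: lin_ext_def fun_eq_iff)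

lemma lin_ext_comp: "lin_ext \<Phi> A \<circ> lin_ext \<Phi> B = lin_ext \<Phi> (\<lambda>w. lin_ext \<Phi> A (B w))"
proof (rule ext, rule ext)
  fix F u
  have "(lin_ext \<Phi> A \<circ> lin_ext \<Phi> B) F u = (\<Sum>v\<in>weyl_group \<Phi>. (\<Sum>w\<in>weyl_group \<Phi>. F w * B w v) * A v u)"
    by (simp add: lin_ext_def)
  also have "\<dots> = (\<Sum>v\<in>weyl_group \<Phi>. \<Sum>w\<in>weyl_group \<Phi>. F w * (B w v * A v u))"
    by (simp add: sum_distrib_right mult.assoc)
  also have "\<dots> = (\<Sum>w\<in>weyl_group \<Phi>. \<Sum>v\<in>weyl_group \<Phi>. F w * (B w v * A v u))" by (rule sum.swap)
  also have "\<dots> = lin_ext \<Phi> (\<lambda>w. lin_ext \<Phi> A (B w)) F u"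
    by (simp add: lin_ext_def sum_distrib_left)
  finally show "(lin_ext \<Phi> A \<circ> lin_ext \<Phi> B) F u = lin_ext \<Phi> (\<lambda>w. lin_ext \<Phi> A (B w)) F u" .
qed
definition rep :: "'a::euclidean_space set \<Rightarrow> ('a kmod \<Rightarrow> 'a kmod) \<Rightarrow> bool" where
  "rep \<Phi> P \<longleftrightarrow> (\<exists>A. P = lin_ext \<Phi> A)"

lemma rep_lin: "rep \<Phi> (lin_ext \<Phi> A)" by (auto simp: rep_def)

lemma rep_comp: "rep \<Phi> P \<Longrightarrow> rep \<Phi> Q \<Longrightarrow> rep \<Phi> (P \<circ> Q)"
  unfolding rep_def using lin_ext_comp by blast

lemma rep_add: "rep \<Phi> P \<Longrightarrow> rep \<Phi> Q \<Longrightarrow> rep \<Phi> (P + Q)"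
proof -
  assume "rep \<Phi> P" "rep \<Phi> Q"
  then obtain A B where AB: "P = lin_ext \<Phi> A" "Q = lin_ext \<Phi> B" by (auto simp: rep_def)
  have "P + Q = lin_ext \<Phi> (\<lambda>w u. A w u + B w u)"
  proof (rule ext, rule ext)
    fix F u
    show "(P + Q) F u = lin_ext \<Phi> (\<lambda>w u. A w u + B w u) F u"
      unfolding AB lin_ext_def plus_fun_def by (simp add: distrib_left sum.distrib)
  qed
  thus ?thesis unfolding rep_def by blast
qed

lemma rep_neg: "rep \<Phi> P \<Longrightarrow> rep \<Phi> (- P)"
proof -
  assume "rep \<Phi> P"
  then obtain A where A: "P = lin_ext \<Phi> A" by (auto simp: rep_def)
  have "- P = lin_ext \<Phi> (\<lambda>w u. - A w u)"
  proof (rule ext, rule ext)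
    fix F u
    show "(- P) F u = lin_ext \<Phi> (\<lambda>w u. - A w u) F u"
      unfolding A lin_ext_def fun_Compl_def by (simp add: sum_negf)
  qed
  thus ?thesis unfolding rep_def by blast
qed

lemma rep_diff: "rep \<Phi> P \<Longrightarrow> rep \<Phi> Q \<Longrightarrow> rep \<Phi> (P - Q)"
proof -
  assume "rep \<Phi> P" "rep \<Phi> Q"
  hence "rep \<Phi> (P + - Q)" using rep_add rep_neg by blast
  moreover have "P + - Q = P - Q" by (rule ext) (simp add: fun_Compl_def plus_fun_def fun_diff_def)
  ultimately show ?thesis by simp
qed

lemma lin_ext_cb:
  assumes "finite (weyl_group \<Phi>)" "v \<in> weyl_group \<Phi>"
  shows "lin_ext \<Phi> A (cbasis c v) = (\<lambda>u. c * A v u)"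
proof
  fix u
  have "lin_ext \<Phi> A (cbasis c v) u = (\<Sum>w\<in>weyl_group \<Phi>. cbasis c v w * A w u)" by (simp only: lin_ext_def)
  also have "\<dots> = (\<Sum>w\<in>weyl_group \<Phi>. if w = v then c * A v u else 0)"
    by (rule sum.cong[OF refl]) (simp add: cbasis_def)
  also have "\<dots> = c * A v u" using sum.delta[OF assms(1), of v "\<lambda>_. c * A v u"] assms(2) by simp
  finally show "lin_ext \<Phi> A (cbasis c v) u = c * A v u" .
qed

lemma rep_eq:
  assumes P: "rep \<Phi> P" and Q: "rep \<Phi> Q"
    and h: "finite (weyl_group \<Phi>) \<Longrightarrow> \<forall>w\<in>weyl_group \<Phi>. P (cbasis 1 w) = Q (cbasis 1 w)"
  shows "P = Q"
proof -
  obtain A B where A: "P = lin_ext \<Phi> A" and B: "Q = lin_ext \<Phi> B" using P Q by (auto simp: rep_def)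
  show ?thesis
  proof (cases "finite (weyl_group \<Phi>)")
    case True
    have AB: "A w = B w" if w: "w \<in> weyl_group \<Phi>" for w
    proof
      fix u
      have "lin_ext \<Phi> A (cbasis 1 w) = lin_ext \<Phi> B (cbasis 1 w)" using h[OF True] w A B by blast
      hence "(\<lambda>u. 1 * A w u) = (\<lambda>u. 1 * B w u)"
        by (simp only: lin_ext_cb[OF True w])
      thus "A w u = B w u" by (metis mult_1)
    qed
    show ?thesis unfolding A B
    proof (rule ext, rule ext)
      fix F u
      show "lin_ext \<Phi> A F u = lin_ext \<Phi> B F u"
        unfolding lin_ext_def by (rule sum.cong[OF refl]) (simp only: AB)
    qed
  next
    case False
    show ?thesis unfolding A B lin_ext_def by (simp only: sum.infinite[OF False])
  qed
qed

lemma cb_add: "cbasis x v + cbasis y v = cbasis (x + y) v"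
  by (simp add: cbasis_def fun_eq_iff)
lemma cb_neg: "- cbasis x v = cbasis (- x) v"
  by (simp add: cbasis_def fun_eq_iff fun_Compl_def)
lemma cb_zero: "cbasis 0 v = 0"
  by (simp add: cbasis_def fun_eq_iff)
lemma cb_diff: "cbasis x v - cbasis y v = cbasis (x - y) v"
  by (simp add: cbasis_def fun_eq_iff fun_diff_def)
lemma cb_mult: "(\<lambda>u. c * cbasis x v u) = cbasis (c * x) v"
  by (simp add: cbasis_def fun_eq_iff)

lemma xmon_mult: "xmon a * xmon b = xmon (a + b)"
  by (simp add: xmon_def mult_single)

lemma rep_Xop: "rep \<Phi> (Xop \<Phi> \<alpha> r \<mu>)" unfolding Xop_def by (rule rep_lin)
lemma rep_Bpos: "rep \<Phi> (Bpos \<Phi> \<alpha> r \<mu>)" unfolding Bpos_def by (rule rep_lin)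
lemma rep_Top: "rep \<Phi> (Top \<Phi> \<alpha> r i)" unfolding Top_def by (rule rep_lin)
lemma rep_Bop: "rep \<Phi> (Bop \<Phi> \<alpha> r \<mu>)" unfolding Bop_def by (auto intro: rep_Bpos rep_neg)
lemma rep_Rop: "rep \<Phi> (Rop \<Phi> \<alpha> r \<mu>)" unfolding Rop_def by (intro rep_add rep_comp rep_Xop rep_Bop)

lemma rep_add_app: "rep \<Phi> P \<Longrightarrow> P (F + G) = P F + P G"
  unfolding rep_def using lin_ext_add by blast
lemma rep_neg_app: "rep \<Phi> P \<Longrightarrow> P (- F) = - P F"
  unfolding rep_def using lin_ext_neg by blast
lemma rep_zero_app: "rep \<Phi> P \<Longrightarrow> P 0 = 0"
  unfolding rep_def using lin_ext_zero by blast
lemma rep_if_app: assumes a: "rep \<Phi> P" shows "P (if C then F else 0) = (if C then P F else 0)"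
  by (cases C) (simp_all only: if_True if_False rep_zero_app[OF a])
lemma rep_diff_app: assumes a: "rep \<Phi> P" shows "P (F - G) = P F - P G"
  by (simp only: diff_conv_add_uminus rep_add_app[OF a] rep_neg_app[OF a])

lemma Xop_cb: "finite (weyl_group \<Phi>) \<Longrightarrow> v \<in> weyl_group \<Phi> \<Longrightarrow>
  Xop \<Phi> \<alpha> r \<mu> (cbasis c v) = cbasis (c * xmon ((1 / coxeter_number \<Phi> \<alpha> r) *\<^sub>R v \<mu>)) v"
  unfolding Xop_def by (simp only: lin_ext_cb cb_mult)

lemma Bpos_cb: assumes "finite (weyl_group \<Phi>)" "v \<in> weyl_group \<Phi>" shows
  "Bpos \<Phi> \<alpha> r \<gamma> (cbasis c v) = (if weyl_length \<alpha> r (v \<circ> sref \<gamma>) + 1 = weyl_length \<alpha> r v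
     then cbasis c (v \<circ> sref \<gamma>) else 0)"
proof -
  have e: "Bpos \<Phi> \<alpha> r \<gamma> (cbasis c v) = (\<lambda>u. c * (if weyl_length \<alpha> r (v \<circ> sref \<gamma>) + 1 = weyl_length \<alpha> r v
     then cbasis 1 (v \<circ> sref \<gamma>) else (\<lambda>_. 0)) u)"
    unfolding Bpos_def by (rule lin_ext_cb[OF assms])
  show ?thesis
  proof (cases "weyl_length \<alpha> r (v \<circ> sref \<gamma>) + 1 = weyl_length \<alpha> r v")
    case True
    show ?thesis unfolding e by (simp only: if_P[OF True] cb_mult mult_1_right)
  next
    case False
    show ?thesis unfolding e by (simp only: if_not_P[OF False] mult_zero_right zero_fun_def)
  qed
qed

lemma Top_cb: assumes "finite (weyl_group \<Phi>)" "v \<in> weyl_group \<Phi>" shows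
  "Top \<Phi> \<alpha> r i (cbasis c v) = (if weyl_length \<alpha> r (v \<circ> sref (\<alpha> i)) = weyl_length \<alpha> r v + 1
     then cbasis c (v \<circ> sref (\<alpha> i))
     else if weyl_length \<alpha> r (v \<circ> sref (\<alpha> i)) + 1 = weyl_length \<alpha> r v
     then cbasis c v else 0)"
proof -
  have e: "Top \<Phi> \<alpha> r i (cbasis c v) = (\<lambda>u. c * (if weyl_length \<alpha> r (v \<circ> sref (\<alpha> i)) = weyl_length \<alpha> r v + 1
     then cbasis 1 (v \<circ> sref (\<alpha> i))
     else if weyl_length \<alpha> r (v \<circ> sref (\<alpha> i)) + 1 = weyl_length \<alpha> r v
     then cbasis 1 v else (\<lambda>_. 0)) u)"
    unfolding Top_def by (rule lin_ext_cb[OF assms])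
  show ?thesis
  proof (cases "weyl_length \<alpha> r (v \<circ> sref (\<alpha> i)) = weyl_length \<alpha> r v + 1")
    case True
    show ?thesis unfolding e by (simp only: if_P[OF True] cb_mult mult_1_right)
  next
    case False
    note F = False
    show ?thesis
    proof (cases "weyl_length \<alpha> r (v \<circ> sref (\<alpha> i)) + 1 = weyl_length \<alpha> r v")
      case True
      show ?thesis unfolding e by (simp only: if_P[OF True] if_not_P[OF F] cb_mult mult_1_right)
    next
      case False
      show ?thesis unfolding e by (simp only: if_not_P[OF False] if_not_P[OF F] mult_zero_right zero_fun_def)
    qed
  qed
qed


definition xm :: "real \<Rightarrow> ('a::real_vector \<Rightarrow> 'a) \<Rightarrow> 'a \<Rightarrow> 'a coeff" where
  "xm k v \<mu> = xmon (k *\<^sub>R v \<mu>)"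

lemma xm_mult: "linear v \<Longrightarrow> xm k v \<mu> * xm k v \<nu> = xm k v (\<mu> + \<nu>)"
  by (simp add: xm_def xmon_mult linear_add scaleR_add_right)

lemma xm_comp: "xm k (v \<circ> f) \<mu> = xm k v (f \<mu>)"
  by (simp add: xm_def)

section \<open>Root system locale\<close>

locale rs =
  fixes \<Phi> :: "'a::euclidean_space set" and \<alpha> :: "nat \<Rightarrow> 'a" and r :: nat
  assumes RS: "root_system \<Phi>" and BASE: "is_base \<Phi> \<alpha> r"
begin

abbreviation "Pos \<equiv> pos_roots \<Phi> \<alpha> r"
abbreviation "sw \<equiv> simple_word \<alpha>"
abbreviation "L \<equiv> weyl_length \<alpha> r"
abbreviation "W \<equiv> weyl_group \<Phi>"

lemma zero_notin: "0 \<notin> \<Phi>" using RS by (simp add: root_system_def)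
lemma nz: "b \<in> \<Phi> \<Longrightarrow> b \<noteq> 0" using zero_notin by auto
lemma sref_in: "b \<in> \<Phi> \<Longrightarrow> x \<in> \<Phi> \<Longrightarrow> sref b x \<in> \<Phi>"
  using RS unfolding root_system_def by blast
lemma integ: "b \<in> \<Phi> \<Longrightarrow> x \<in> \<Phi> \<Longrightarrow> x \<bullet> coroot b \<in> \<int>"
  using RS unfolding root_system_def by blast
lemma reduced: "b \<in> \<Phi> \<Longrightarrow> c *\<^sub>R b \<in> \<Phi> \<Longrightarrow> c = 1 \<or> c = -1"
  using RS unfolding root_system_def by blast
lemma neg_in: "b \<in> \<Phi> \<Longrightarrow> - b \<in> \<Phi>"
  using sref_in[of b b] sref_self[OF nz] by auto

lemma base_in: "i \<in> {1..r} \<Longrightarrow> \<alpha> i \<in> \<Phi>" using BASE by (simp add: is_base_def)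
lemma base_inj: "inj_on \<alpha> {1..r}" using BASE by (simp add: is_base_def)
lemma base_indep: "independent (\<alpha> ` {1..r})" using BASE by (simp add: is_base_def)
lemma base_decomp: "b \<in> \<Phi> \<Longrightarrow> \<exists>k::nat \<Rightarrow> int. b = (\<Sum>i=1..r. of_int (k i) *\<^sub>R \<alpha> i)
           \<and> ((\<forall>i\<in>{1..r}. k i \<ge> 0) \<or> (\<forall>i\<in>{1..r}. k i \<le> 0))"
  using BASE by (simp add: is_base_def)

lemma lincomb_zero:
  assumes "(\<Sum>j=1..r. c j *\<^sub>R \<alpha> j) = 0" and "j \<in> {1..r}" shows "c j = 0"
proof (rule ccontr)
  assume cj: "c j \<noteq> 0"
  define u where "u v = c (the_inv_into {1..r} \<alpha> v)" for v
  have "(\<Sum>v\<in>\<alpha> ` {1..r}. u v *\<^sub>R v) = (\<Sum>j=1..r. u (\<alpha> j) *\<^sub>R \<alpha> j)"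
    by (rule sum.reindex[OF base_inj, unfolded comp_def])
  also have "\<dots> = (\<Sum>j=1..r. c j *\<^sub>R \<alpha> j)"
  proof (rule sum.cong[OF refl])
    fix x assume "x \<in> {1..r}"
    have "the_inv_into {1..r} \<alpha> (\<alpha> x) = x" by (rule the_inv_into_f_f[OF base_inj]) fact
    thus "u (\<alpha> x) *\<^sub>R \<alpha> x = c x *\<^sub>R \<alpha> x" by (simp add: u_def)
  qed
  finally have "(\<Sum>v\<in>\<alpha> ` {1..r}. u v *\<^sub>R v) = 0" using assms by simp
  moreover have "\<exists>v\<in>\<alpha> ` {1..r}. u v \<noteq> 0"
  proof
    show "\<alpha> j \<in> \<alpha> ` {1..r}" using assms(2) by blast
    have "the_inv_into {1..r} \<alpha> (\<alpha> j) = j" by (rule the_inv_into_f_f[OF base_inj assms(2)])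
    thus "u (\<alpha> j) \<noteq> 0" using cj by (simp add: u_def)
  qed
  ultimately have "dependent (\<alpha> ` {1..r})"
    using dependent_finite[of "\<alpha> ` {1..r}"] by auto
  thus False using base_indep by simp
qed

lemma coef_unique:
  assumes "(\<Sum>j=1..r. c j *\<^sub>R \<alpha> j) = (\<Sum>j=1..r. d j *\<^sub>R \<alpha> j)" and "j \<in> {1..r}"
  shows "c j = d j"
proof -
  have "(\<Sum>j=1..r. (c j - d j) *\<^sub>R \<alpha> j) = 0"
    using assms(1) by (simp add: scaleR_diff_left sum_subtractf)
  from lincomb_zero[OF this assms(2)] show ?thesis by simp
qed

lemma coef_unique_int:
  assumes "(\<Sum>j=1..r. of_int (c j) *\<^sub>R \<alpha> j) = (\<Sum>j=1..r. of_int (d j) *\<^sub>R \<alpha> j)" and "j \<in> {1..r}"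
  shows "c j = d j"
  using coef_unique[OF assms] by simp

lemma Pos_in: "b \<in> Pos \<Longrightarrow> b \<in> \<Phi>" by (simp add: pos_roots_def)

lemma PosI: "b \<in> \<Phi> \<Longrightarrow> b = (\<Sum>i=1..r. of_int (k i) *\<^sub>R \<alpha> i) \<Longrightarrow> (\<forall>i\<in>{1..r}. k i \<ge> 0) \<Longrightarrow> b \<in> Pos"
  by (auto simp: pos_roots_def)

lemma PosE: "b \<in> Pos \<Longrightarrow> (\<And>k. b = (\<Sum>i=1..r. of_int (k i) *\<^sub>R \<alpha> i) \<Longrightarrow> (\<forall>i\<in>{1..r}. k i \<ge> 0) \<Longrightarrow> thesis) \<Longrightarrow> thesis"
  by (auto simp: pos_roots_def)

lemma pos_or_neg: "b \<in> \<Phi> \<Longrightarrow> b \<in> Pos \<or> - b \<in> Pos"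
proof -
  assume b: "b \<in> \<Phi>"
  from base_decomp[OF b] obtain k where k: "b = (\<Sum>i=1..r. of_int (k i) *\<^sub>R \<alpha> i)"
    and sg: "(\<forall>i\<in>{1..r}. k i \<ge> 0) \<or> (\<forall>i\<in>{1..r}. k i \<le> 0)" by blast
  show ?thesis
  proof (cases "\<forall>i\<in>{1..r}. k i \<ge> 0")
    case True thus ?thesis using PosI[OF b k] by blast
  next
    case False
    hence "\<forall>i\<in>{1..r}. - k i \<ge> 0" using sg by auto
    moreover have "- b = (\<Sum>i=1..r. of_int (- k i) *\<^sub>R \<alpha> i)"
      using k by (simp add: sum_negf[symmetric])
    ultimately have "- b \<in> Pos" by (intro PosI[OF neg_in[OF b]])
    thus ?thesis by blast
  qed
qed

lemma not_both: "b \<in> Pos \<Longrightarrow> - b \<in> Pos \<Longrightarrow> False"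
proof -
  assume b: "b \<in> Pos" and nb: "- b \<in> Pos"
  obtain k where k: "b = (\<Sum>i=1..r. of_int (k i) *\<^sub>R \<alpha> i)" "\<forall>i\<in>{1..r}. k i \<ge> 0"
    using b by (rule PosE)
  obtain m where m: "- b = (\<Sum>i=1..r. of_int (m i) *\<^sub>R \<alpha> i)" "\<forall>i\<in>{1..r}. m i \<ge> 0"
    using nb by (rule PosE)
  have "(\<Sum>i=1..r. of_int (k i + m i) *\<^sub>R \<alpha> i) = (\<Sum>i=1..r. of_int (k i) *\<^sub>R \<alpha> i) + (\<Sum>i=1..r. of_int (m i) *\<^sub>R \<alpha> i)"
    by (simp add: scaleR_add_left sum.distrib)
  also have "\<dots> = b + - b" using k(1) m(1) by simp
  also have "\<dots> = (\<Sum>i=1..r. of_int ((\<lambda>_. 0::int) i) *\<^sub>R \<alpha> i)" by simp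
  finally have "(\<Sum>i=1..r. of_int (k i + m i) *\<^sub>R \<alpha> i) = (\<Sum>i=1..r. of_int ((\<lambda>_. 0::int) i) *\<^sub>R \<alpha> i)" .
  hence "\<forall>i\<in>{1..r}. k i + m i = 0" using coef_unique_int[of "\<lambda>i. k i + m i" "\<lambda>_. 0"] by auto
  hence "\<forall>i\<in>{1..r}. k i = 0" using k(2) m(2) by force
  hence "b = 0" using k(1) by simp
  thus False using nz[OF Pos_in[OF b]] by simp
qed

lemma a_pos: assumes i: "i \<in> {1..r}" shows "\<alpha> i \<in> Pos"
proof (rule PosI[where k="\<lambda>j. if j = i then 1 else 0"])
  show "\<alpha> i \<in> \<Phi>" using base_in[OF i] .
  have "(\<Sum>j=1..r. of_int (if j = i then 1 else 0) *\<^sub>R \<alpha> j) = (\<Sum>j=1..r. if j = i then \<alpha> j else 0)"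
    by (rule sum.cong) auto
  also have "\<dots> = \<alpha> i" using i by simp
  finally show "\<alpha> i = (\<Sum>j=1..r. of_int (if j = i then 1 else 0) *\<^sub>R \<alpha> j)" by simp
qed auto

lemma sref_coeffs:
  assumes i: "i \<in> {1..r}" and b: "b \<in> \<Phi>" and k: "b = (\<Sum>j=1..r. of_int (k j) *\<^sub>R \<alpha> j)"
  shows "\<exists>c. b \<bullet> coroot (\<alpha> i) = of_int c \<and>
     sref (\<alpha> i) b = (\<Sum>j=1..r. of_int (k j - (if j = i then c else 0)) *\<^sub>R \<alpha> j)"
proof -
  obtain c where c: "b \<bullet> coroot (\<alpha> i) = of_int c"
    using integ[OF base_in[OF i] b] by (auto elim: Ints_cases)
  have "(\<Sum>j=1..r. of_int (k j - (if j = i then c else 0)) *\<^sub>R \<alpha> j)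
      = (\<Sum>j=1..r. of_int (k j) *\<^sub>R \<alpha> j) - (\<Sum>j=1..r. (if j = i then of_int c *\<^sub>R \<alpha> j else 0))"
    by (subst sum_subtractf[symmetric], rule sum.cong) (auto simp: scaleR_diff_left)
  also have "\<dots> = b - of_int c *\<^sub>R \<alpha> i" using i k by simp
  finally show ?thesis using c by (auto simp: sref_def)
qed

lemma sref_pos:
  assumes i: "i \<in> {1..r}" and b: "b \<in> Pos" and ne: "b \<noteq> \<alpha> i"
  shows "sref (\<alpha> i) b \<in> Pos"
proof -
  obtain k where k: "b = (\<Sum>j=1..r. of_int (k j) *\<^sub>R \<alpha> j)" "\<forall>j\<in>{1..r}. k j \<ge> 0"
    using b by (rule PosE)
  have bP: "b \<in> \<Phi>" using b Pos_in by blast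
  obtain c where c: "sref (\<alpha> i) b = (\<Sum>j=1..r. of_int (k j - (if j = i then c else 0)) *\<^sub>R \<alpha> j)"
    using sref_coeffs[OF i bP k(1)] by blast
  have sP: "sref (\<alpha> i) b \<in> \<Phi>" by (rule sref_in[OF base_in[OF i] bP])
  from base_decomp[OF sP] obtain m where m: "sref (\<alpha> i) b = (\<Sum>j=1..r. of_int (m j) *\<^sub>R \<alpha> j)"
    and sg: "(\<forall>j\<in>{1..r}. m j \<ge> 0) \<or> (\<forall>j\<in>{1..r}. m j \<le> 0)" by blast
  show ?thesis
  proof (cases "\<forall>j\<in>{1..r}. m j \<ge> 0")
    case True thus ?thesis using PosI[OF sP m] by blast
  next
    case False
    hence le: "\<forall>j\<in>{1..r}. m j \<le> 0" using sg by auto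
    have "(\<Sum>j=1..r. of_int (m j) *\<^sub>R \<alpha> j) = (\<Sum>j=1..r. of_int (k j - (if j = i then c else 0)) *\<^sub>R \<alpha> j)"
      using m c by simp
    note eq = coef_unique_int[OF this]
    have z: "k j = 0" if j: "j \<in> {1..r}" "j \<noteq> i" for j
    proof -
      have "m j = k j" using eq[OF j(1)] j(2) by simp
      moreover have "m j \<le> 0" using le j(1) by blast
      moreover have "k j \<ge> 0" using k(2) j(1) by blast
      ultimately show ?thesis by simp
    qed
    have "b = (\<Sum>j=1..r. (if j = i then of_int (k i) *\<^sub>R \<alpha> i else 0))"
      unfolding k(1) by (rule sum.cong[OF refl]) (simp add: z)
    hence bk: "b = of_int (k i) *\<^sub>R \<alpha> i" using i by simp
    have "of_int (k i) *\<^sub>R \<alpha> i \<in> \<Phi>" using bk bP by simp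
    from reduced[OF base_in[OF i] this]
    have "of_int (k i) = (1::real) \<or> of_int (k i) = (-1::real)" .
    moreover have "k i \<ge> 0" using k(2) i by blast
    ultimately have "k i = 1" by auto
    thus ?thesis using bk ne by simp
  qed
qed

lemma sref_neg_pos:
  assumes i: "i \<in> {1..r}" and b: "- b \<in> Pos" and ne: "b \<noteq> - \<alpha> i"
  shows "- sref (\<alpha> i) b \<in> Pos"
proof -
  have "- b \<noteq> \<alpha> i" using ne by (metis minus_minus)
  hence "sref (\<alpha> i) (- b) \<in> Pos" using sref_pos[OF i b] by auto
  thus ?thesis using linear_neg[OF linear_sref] by metis
qed

lemma pos_ne0: "b \<in> Pos \<Longrightarrow> b \<noteq> 0" by (rule nz[OF Pos_in])

lemma W_orth: "w \<in> W \<Longrightarrow> orth w"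
proof (induction rule: weyl_group.induct)
  case id_in show ?case by (rule orth_id)
next
  case (refl_in w b)
  hence "orth w" "b \<in> \<Phi>" by auto
  thus ?case using orth_comp orth_sref nz by blast
qed

lemma W_Phi: "w \<in> W \<Longrightarrow> x \<in> \<Phi> \<Longrightarrow> w x \<in> \<Phi>"
proof (induction arbitrary: x rule: weyl_group.induct)
  case id_in thus ?case by simp
next
  case (refl_in w b x) thus ?case using sref_in by simp
qed

lemma sw_Nil[simp]: "sw [] = id" by (simp add: simple_word_def)
lemma sw_Cons[simp]: "sw (i # xs) = sref (\<alpha> i) \<circ> sw xs" by (simp add: simple_word_def)
lemma sw_append: "sw (xs @ ys) = sw xs \<circ> sw ys"
  by (induction xs) auto

lemma sw_orth: "set xs \<subseteq> {1..r} \<Longrightarrow> orth (sw xs)"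
proof (induction xs)
  case Nil thus ?case by (simp only: sw_Nil orth_id)
next
  case (Cons i xs)
  hence i: "i \<in> {1..r}" and "set xs \<subseteq> {1..r}" by auto
  hence "orth (sw xs)" using Cons.IH by blast
  thus ?case by (simp only: sw_Cons) (rule orth_comp[OF orth_sref[OF nz[OF base_in[OF i]]]])
qed

lemma sw_Phi: "set xs \<subseteq> {1..r} \<Longrightarrow> x \<in> \<Phi> \<Longrightarrow> sw xs x \<in> \<Phi>"
proof (induction xs arbitrary: x)
  case Nil thus ?case by simp
next
  case (Cons i xs x)
  hence i: "i \<in> {1..r}" and "set xs \<subseteq> {1..r}" by auto
  hence "sw xs x \<in> \<Phi>" using Cons by blast
  thus ?case using sref_in[OF base_in[OF i]] by simp
qed

lemma sref_sw_height:
  "\<And>b k. b \<in> Pos \<Longrightarrow> b = (\<Sum>j=1..r. of_int (k j) *\<^sub>R \<alpha> j) \<Longrightarrow> (\<forall>j\<in>{1..r}. k j \<ge> 0)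
    \<Longrightarrow> nat (\<Sum>j=1..r. k j) = n \<Longrightarrow> \<exists>xs. set xs \<subseteq> {1..r} \<and> sref b = sw xs"
proof (induction n rule: less_induct)
  case (less n b k)
  have bP: "b \<in> \<Phi>" using less.prems(1) Pos_in by blast
  have pos: "b \<bullet> b > 0" using nz[OF bP] by simp
  have "b \<bullet> b = b \<bullet> (\<Sum>j=1..r. of_int (k j) *\<^sub>R \<alpha> j)" using less.prems(2) by simp
  also have "\<dots> = (\<Sum>j=1..r. of_int (k j) * (b \<bullet> \<alpha> j))" by (simp add: inner_sum_right)
  finally have bb: "b \<bullet> b = (\<Sum>j=1..r. of_int (k j) * (b \<bullet> \<alpha> j))" .
  have "\<exists>j\<in>{1..r}. of_int (k j) * (b \<bullet> \<alpha> j) > 0"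
  proof (rule ccontr)
    assume "\<not> (\<exists>j\<in>{1..r}. of_int (k j) * (b \<bullet> \<alpha> j) > 0)"
    hence "\<forall>j\<in>{1..r}. of_int (k j) * (b \<bullet> \<alpha> j) \<le> (0::real)" by (simp add: not_less)
    hence "(\<Sum>j=1..r. of_int (k j) * (b \<bullet> \<alpha> j)) \<le> (0::real)" by (intro sum_nonpos) blast
    thus False using pos bb by linarith
  qed
  then obtain j where j: "j \<in> {1..r}" and pj: "of_int (k j) * (b \<bullet> \<alpha> j) > 0" by blast
  have "k j \<ge> 0" using less.prems(3) j by blast
  hence kj: "k j > 0" and bj: "b \<bullet> \<alpha> j > 0"
    using pj by (auto simp: zero_less_mult_iff)
  show ?case
  proof (cases "b = \<alpha> j")
    case True
    show ?thesis
    proof (intro exI[of _ "[j]"] conjI)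
      show "set [j] \<subseteq> {1..r}" using j by simp
      show "sref b = sw [j]" using True by simp
    qed
  next
    case False
    define b' where "b' = sref (\<alpha> j) b"
    have b'P: "b' \<in> Pos" unfolding b'_def by (rule sref_pos[OF j less.prems(1) False])
    obtain c where c: "b \<bullet> coroot (\<alpha> j) = of_int c"
      and b'k: "b' = (\<Sum>i=1..r. of_int (k i - (if i = j then c else 0)) *\<^sub>R \<alpha> i)"
      using sref_coeffs[OF j bP less.prems(2)] unfolding b'_def by blast
    have "\<alpha> j \<bullet> \<alpha> j > 0" using nz[OF base_in[OF j]] by simp
    hence "b \<bullet> coroot (\<alpha> j) > 0" using bj by (simp add: coroot_def)
    hence c1: "c \<ge> 1" using c by simp
    obtain m where m: "b' = (\<Sum>i=1..r. of_int (m i) *\<^sub>R \<alpha> i)" "\<forall>i\<in>{1..r}. m i \<ge> 0"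
      using b'P by (rule PosE)
    have e: "(\<Sum>i=1..r. of_int (m i) *\<^sub>R \<alpha> i) = (\<Sum>i=1..r. of_int (k i - (if i = j then c else 0)) *\<^sub>R \<alpha> i)"
      by (rule trans[OF m(1)[symmetric] b'k])
    have meq: "m i = k i - (if i = j then c else 0)" if "i \<in> {1..r}" for i
      by (rule coef_unique_int[OF e that])
    have "(\<Sum>i=1..r. m i) = (\<Sum>i=1..r. k i - (if i = j then c else 0))"
      by (rule sum.cong[OF refl meq])
    also have "\<dots> = (\<Sum>i=1..r. k i) - (\<Sum>i=1..r. (if i = j then c else 0))" by (rule sum_subtractf)
    also have "(\<Sum>i=1..r. (if i = j then c else 0)) = c" using j by simp
    finally have sm: "(\<Sum>i=1..r. m i) = (\<Sum>i=1..r. k i) - c" .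
    have m0: "(\<Sum>i=1..r. m i) \<ge> 0" by (rule sum_nonneg) (use m(2) in blast)
    hence "nat (\<Sum>i=1..r. m i) < nat (\<Sum>i=1..r. k i)" using sm c1 by (simp add: nat_less_eq_zless)
    hence "nat (\<Sum>i=1..r. m i) < n" using less.prems(4) by metis
    from less.IH[OF this b'P m(1) m(2) refl]
    obtain xs where xs: "set xs \<subseteq> {1..r}" "sref b' = sw xs" by blast
    have "b = sref (\<alpha> j) b'" unfolding b'_def using nz[OF base_in[OF j]] by simp
    hence "sref b = sref (\<alpha> j) \<circ> sref b' \<circ> sref (\<alpha> j)"
      using sref_conj[OF nz[OF base_in[OF j]]] by simp
    also have "\<dots> = sw (j # xs @ [j])" using xs(2) by (simp add: sw_append comp_assoc)
    finally have "sref b = sw (j # xs @ [j])" .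
    moreover have "set (j # xs @ [j]) \<subseteq> {1..r}" using xs(1) j by simp
    ultimately show ?thesis by blast
  qed
qed

lemma sref_sw: "b \<in> \<Phi> \<Longrightarrow> \<exists>xs. set xs \<subseteq> {1..r} \<and> sref b = sw xs"
proof -
  assume b: "b \<in> \<Phi>"
  have "\<exists>xs. set xs \<subseteq> {1..r} \<and> sref c = sw xs" if c: "c \<in> Pos" for c
  proof -
    obtain k where "c = (\<Sum>j=1..r. of_int (k j) *\<^sub>R \<alpha> j)" "\<forall>j\<in>{1..r}. k j \<ge> 0"
      using c by (rule PosE)
    thus ?thesis using sref_sw_height[OF c] by blast
  qed
  thus ?thesis using pos_or_neg[OF b] sref_neg[of b] by force
qed

lemma W_sw: "w \<in> W \<Longrightarrow> \<exists>xs. set xs \<subseteq> {1..r} \<and> w = sw xs"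
proof (induction rule: weyl_group.induct)
  case id_in thus ?case by (intro exI[of _ "[]"]) simp
next
  case (refl_in w b)
  then obtain xs where "set xs \<subseteq> {1..r}" "w = sw xs" by blast
  moreover obtain ys where "set ys \<subseteq> {1..r}" "sref b = sw ys" using sref_sw[OF refl_in(2)] by blast
  ultimately show ?case by (intro exI[of _ "xs @ ys"]) (auto simp: sw_append)
qed

lemma W_sref: "w \<in> W \<Longrightarrow> b \<in> \<Phi> \<Longrightarrow> w \<circ> sref b \<in> W"
  by (rule weyl_group.refl_in)

lemma deletion:
  assumes "set xs \<subseteq> {1..r}" and d: "d \<in> Pos" and neg: "- (sw xs d) \<in> Pos"
  shows "\<exists>j < length xs. sw xs \<circ> sref d = sw (take j xs @ drop (Suc j) xs)"
  using assms(1) neg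
proof (induction xs)
  case Nil thus ?case using not_both[OF d] by simp
next
  case (Cons i xs)
  have i: "i \<in> {1..r}" and isr: "set xs \<subseteq> {1..r}" using Cons.prems(1) by auto
  show ?case
  proof (cases "- (sw xs d) \<in> Pos")
    case True
    from Cons.IH[OF isr True] obtain j where "j < length xs"
      "sw xs \<circ> sref d = sw (take j xs @ drop (Suc j) xs)" by blast
    hence j: "j < length xs" "sw xs \<circ> sref d = sw (take j xs @ drop (Suc j) xs)" by auto
    have "sw (i # xs) \<circ> sref d = sref (\<alpha> i) \<circ> (sw xs \<circ> sref d)" by (simp only: sw_Cons comp_assoc)
    also have "\<dots> = sw (take (Suc j) (i#xs) @ drop (Suc (Suc j)) (i#xs))"
      by (simp only: j(2) take_Suc_Cons drop_Suc_Cons append_Cons sw_Cons)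
    finally have "sw (i # xs) \<circ> sref d = sw (take (Suc j) (i#xs) @ drop (Suc (Suc j)) (i#xs))" .
    moreover have "Suc j < length (i#xs)" using j(1) by simp
    ultimately show ?thesis by blast
  next
    case False
    have vP: "sw xs d \<in> \<Phi>" using sw_Phi[OF isr Pos_in[OF d]] .
    hence vpos: "sw xs d \<in> Pos" using pos_or_neg False by blast
    have "sw xs d = \<alpha> i"
    proof (rule ccontr)
      assume "sw xs d \<noteq> \<alpha> i"
      from sref_pos[OF i vpos this] have "sref (\<alpha> i) (sw xs d) \<in> Pos" .
      moreover have "- sref (\<alpha> i) (sw xs d) \<in> Pos" using Cons.prems(2) by simp
      ultimately show False using not_both by blast
    qed
    have "sw xs \<circ> sref d = sref (sw xs d) \<circ> sw xs" by (rule orth_conj[OF sw_orth[OF isr]])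
    hence "sw (i # xs) \<circ> sref d = sref (\<alpha> i) \<circ> sref (\<alpha> i) \<circ> sw xs"
      using \<open>sw xs d = \<alpha> i\<close> by (simp add: comp_assoc)
    also have "\<dots> = sw xs" using sref_comp_sref[OF nz[OF base_in[OF i]]] by simp
    finally have e: "sw (i # xs) \<circ> sref d = sw xs" .
    have "sw (take 0 (i#xs) @ drop (Suc 0) (i#xs)) = sw xs" by simp
    hence "sw (i # xs) \<circ> sref d = sw (take 0 (i#xs) @ drop (Suc 0) (i#xs))" using e by simp
    moreover have "0 < length (i#xs)" by simp
    ultimately show ?thesis by blast
  qed
qed

lemma L_le: "set xs \<subseteq> {1..r} \<Longrightarrow> w = sw xs \<Longrightarrow> L w \<le> length xs"
  unfolding weyl_length_def by (rule Least_le) blast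

lemma L_ex: "w \<in> W \<Longrightarrow> \<exists>xs. set xs \<subseteq> {1..r} \<and> w = sw xs \<and> length xs = L w"
proof -
  assume "w \<in> W"
  then obtain xs where "set xs \<subseteq> {1..r} \<and> w = sw xs" using W_sw by blast
  hence "\<exists>n xs. length xs = n \<and> set xs \<subseteq> {1..r} \<and> w = sw xs" by blast
  from LeastI_ex[OF this] show ?thesis unfolding weyl_length_def by blast
qed

lemma L_down: assumes w: "w \<in> W" and d: "d \<in> Pos" and neg: "- (w d) \<in> Pos"
  shows "L (w \<circ> sref d) < L w"
proof -
  obtain xs where xs: "set xs \<subseteq> {1..r}" "w = sw xs" "length xs = L w" using L_ex[OF w] by blast
  from deletion[OF xs(1) d] neg xs(2) obtain j where j: "j < length xs"
    "w \<circ> sref d = sw (take j xs @ drop (Suc j) xs)" by blast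
  have "set (take j xs @ drop (Suc j) xs) \<subseteq> {1..r}" using xs(1)
    using set_take_subset[of j xs] set_drop_subset[of "Suc j" xs] by auto
  from L_le[OF this j(2)] have "L (w \<circ> sref d) \<le> length xs - 1" using j(1) by simp
  thus ?thesis using j(1) xs(3) by linarith
qed

lemma L_iff: assumes w: "w \<in> W" and d: "d \<in> Pos"
  shows "L (w \<circ> sref d) < L w \<longleftrightarrow> - (w d) \<in> Pos"
proof
  assume "- (w d) \<in> Pos" thus "L (w \<circ> sref d) < L w" using L_down[OF w d] by blast
next
  assume lt: "L (w \<circ> sref d) < L w"
  show "- (w d) \<in> Pos"
  proof (rule ccontr)
    assume "- (w d) \<notin> Pos"
    hence wd: "w d \<in> Pos" using pos_or_neg[OF W_Phi[OF w Pos_in[OF d]]] by blast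
    have w': "w \<circ> sref d \<in> W" using W_sref[OF w Pos_in[OF d]] .
    have "(w \<circ> sref d) d = - w d"
      using sref_self[OF pos_ne0[OF d]] linear_neg[OF orth_linear[OF W_orth[OF w]]] by simp
    hence "L (w \<circ> sref d \<circ> sref d) < L (w \<circ> sref d)" using L_down[OF w' d] wd by simp
    moreover have "w \<circ> sref d \<circ> sref d = w" using sref_comp_sref[OF pos_ne0[OF d]] by (simp add: comp_assoc)
    ultimately show False using lt by simp
  qed
qed

lemma L_simple_le: assumes w: "w \<in> W" and i: "i \<in> {1..r}"
  shows "L (w \<circ> sref (\<alpha> i)) \<le> L w + 1" "L w \<le> L (w \<circ> sref (\<alpha> i)) + 1"
proof -
  obtain xs where xs: "set xs \<subseteq> {1..r}" "w = sw xs" "length xs = L w" using L_ex[OF w] by blast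
  have "w \<circ> sref (\<alpha> i) = sw (xs @ [i])" using xs(2) by (simp add: sw_append)
  from L_le[OF _ this] show "L (w \<circ> sref (\<alpha> i)) \<le> L w + 1" using xs i by simp
  have w': "w \<circ> sref (\<alpha> i) \<in> W" using W_sref[OF w base_in[OF i]] .
  obtain ys where ys: "set ys \<subseteq> {1..r}" "w \<circ> sref (\<alpha> i) = sw ys" "length ys = L (w \<circ> sref (\<alpha> i))"
    using L_ex[OF w'] by blast
  have "w = w \<circ> sref (\<alpha> i) \<circ> sref (\<alpha> i)"
    using sref_comp_sref[OF nz[OF base_in[OF i]]] by (simp add: comp_assoc)
  also have "\<dots> = sw (ys @ [i])" using ys(2) by (simp add: sw_append)
  finally have "w = sw (ys @ [i])" .
  from L_le[OF _ this] show "L w \<le> L (w \<circ> sref (\<alpha> i)) + 1" using ys i by simp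
qed

lemma L_up_iff: assumes w: "w \<in> W" and i: "i \<in> {1..r}"
  shows "L (w \<circ> sref (\<alpha> i)) = L w + 1 \<longleftrightarrow> w (\<alpha> i) \<in> Pos"
    and "L (w \<circ> sref (\<alpha> i)) + 1 = L w \<longleftrightarrow> - w (\<alpha> i) \<in> Pos"
    and "L (w \<circ> sref (\<alpha> i)) = L w + 1 \<or> L (w \<circ> sref (\<alpha> i)) + 1 = L w"
proof -
  have ip: "\<alpha> i \<in> Pos" using a_pos[OF i] .
  have iff: "L (w \<circ> sref (\<alpha> i)) < L w \<longleftrightarrow> - (w (\<alpha> i)) \<in> Pos" using L_iff[OF w ip] .
  have w': "w \<circ> sref (\<alpha> i) \<in> W" using W_sref[OF w base_in[OF i]] .
  have "(w \<circ> sref (\<alpha> i)) (\<alpha> i) = - w (\<alpha> i)"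
    using sref_self[OF pos_ne0[OF ip]] linear_neg[OF orth_linear[OF W_orth[OF w]]] by simp
  moreover have "w \<circ> sref (\<alpha> i) \<circ> sref (\<alpha> i) = w"
    using sref_comp_sref[OF pos_ne0[OF ip]] by (simp add: comp_assoc)
  ultimately have iff2: "L w < L (w \<circ> sref (\<alpha> i)) \<longleftrightarrow> w (\<alpha> i) \<in> Pos"
    using L_iff[OF w' ip] by simp
  have pn: "w (\<alpha> i) \<in> Pos \<or> - w (\<alpha> i) \<in> Pos"
    using pos_or_neg[OF W_Phi[OF w base_in[OF i]]] .
  have nb: "\<not> (w (\<alpha> i) \<in> Pos \<and> - w (\<alpha> i) \<in> Pos)" using not_both by blast
  note le = L_simple_le[OF w i]
  have A: "L (w \<circ> sref (\<alpha> i)) = L w + 1" if h: "w (\<alpha> i) \<in> Pos"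
  proof -
    have "L w < L (w \<circ> sref (\<alpha> i))" using iff2 h by blast
    thus ?thesis using le(1) by linarith
  qed
  have B: "L (w \<circ> sref (\<alpha> i)) + 1 = L w" if h: "- w (\<alpha> i) \<in> Pos"
  proof -
    have "L (w \<circ> sref (\<alpha> i)) < L w" using iff h by blast
    thus ?thesis using le(2) by linarith
  qed
  show "L (w \<circ> sref (\<alpha> i)) = L w + 1 \<longleftrightarrow> w (\<alpha> i) \<in> Pos"
  proof
    assume e: "L (w \<circ> sref (\<alpha> i)) = L w + 1"
    show "w (\<alpha> i) \<in> Pos"
    proof (rule ccontr)
      assume "w (\<alpha> i) \<notin> Pos"
      hence "- w (\<alpha> i) \<in> Pos" using pn by blast
      from B[OF this] e show False by linarith
    qed
  qed (rule A)
  show "L (w \<circ> sref (\<alpha> i)) + 1 = L w \<longleftrightarrow> - w (\<alpha> i) \<in> Pos"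
  proof
    assume e: "L (w \<circ> sref (\<alpha> i)) + 1 = L w"
    show "- w (\<alpha> i) \<in> Pos"
    proof (rule ccontr)
      assume "- w (\<alpha> i) \<notin> Pos"
      hence "w (\<alpha> i) \<in> Pos" using pn by blast
      from A[OF this] e show False by linarith
    qed
  qed (rule B)
  show "L (w \<circ> sref (\<alpha> i)) = L w + 1 \<or> L (w \<circ> sref (\<alpha> i)) + 1 = L w"
    using A B pn by blast
qed

lemma conj_simple:
  assumes i: "i \<in> {1..r}"
  shows "sref (\<alpha> i) \<circ> sref (sref (\<alpha> i) g) = sref g \<circ> sref (\<alpha> i)"
proof -
  have n: "\<alpha> i \<noteq> 0" using nz[OF base_in[OF i]] .
  have "sref (\<alpha> i) \<circ> sref (sref (\<alpha> i) g) = (sref (\<alpha> i) \<circ> sref (\<alpha> i)) \<circ> sref g \<circ> sref (\<alpha> i)"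
    by (simp only: sref_conj[OF n] comp_assoc)
  thus ?thesis using sref_comp_sref[OF n] by simp
qed

lemma K1:
  assumes w: "w \<in> W" and i: "i \<in> {1..r}" and g: "g \<in> Pos" and ne: "g \<noteq> \<alpha> i"
    and up: "L (w \<circ> sref (\<alpha> i)) = L w + 1"
  shows "L (w \<circ> sref (\<alpha> i) \<circ> sref (sref (\<alpha> i) g)) + 1 = L (w \<circ> sref (\<alpha> i))
     \<longleftrightarrow> L (w \<circ> sref g) + 1 = L w \<and> L (w \<circ> sref g \<circ> sref (\<alpha> i)) = L (w \<circ> sref g) + 1"
proof -
  define s where "s = sref (\<alpha> i)"
  define b where "b = s g"
  have n: "\<alpha> i \<noteq> 0" using nz[OF base_in[OF i]] .
  have bP: "b \<in> Pos" unfolding b_def s_def by (rule sref_pos[OF i g ne])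
  have eq: "w \<circ> s \<circ> sref b = w \<circ> sref g \<circ> s"
    unfolding b_def s_def using conj_simple[OF i, of g] by (simp add: comp_assoc)
  have v: "w \<circ> s \<in> W" unfolding s_def by (rule W_sref[OF w base_in[OF i]])
  have u: "w \<circ> sref g \<in> W" by (rule W_sref[OF w Pos_in[OF g]])
  have vb: "(w \<circ> s) b = w g" unfolding b_def s_def using n by simp
  note Lv = L_iff[OF v bP, unfolded vb]
  note Lw = L_iff[OF w g]
  note Lu = L_up_iff(3)[OF u i, folded s_def]
  show ?thesis unfolding s_def[symmetric] b_def[symmetric] eq
  proof
    assume h: "L (w \<circ> sref g \<circ> s) + 1 = L (w \<circ> s)"
    hence "L (w \<circ> s \<circ> sref b) < L (w \<circ> s)" using eq by simp
    hence "- w g \<in> Pos" using Lv by blast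
    hence lt: "L (w \<circ> sref g) < L w" using Lw by blast
    show "L (w \<circ> sref g) + 1 = L w \<and> L (w \<circ> sref g \<circ> s) = L (w \<circ> sref g) + 1"
      using Lu lt h up unfolding s_def by linarith
  next
    assume "L (w \<circ> sref g) + 1 = L w \<and> L (w \<circ> sref g \<circ> s) = L (w \<circ> sref g) + 1"
    thus "L (w \<circ> sref g \<circ> s) + 1 = L (w \<circ> s)" using up unfolding s_def by linarith
  qed
qed

lemma K2:
  assumes w: "w \<in> W" and i: "i \<in> {1..r}" and g: "g \<in> Pos" and ne: "g \<noteq> \<alpha> i"
    and down: "L (w \<circ> sref (\<alpha> i)) + 1 = L w"
  shows "\<not> (L (w \<circ> sref g) + 1 = L w \<and> L (w \<circ> sref g \<circ> sref (\<alpha> i)) = L (w \<circ> sref g) + 1)"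
proof
  assume h: "L (w \<circ> sref g) + 1 = L w \<and> L (w \<circ> sref g \<circ> sref (\<alpha> i)) = L (w \<circ> sref g) + 1"
  define s where "s = sref (\<alpha> i)"
  define b where "b = s g"
  have n: "\<alpha> i \<noteq> 0" using nz[OF base_in[OF i]] .
  have bP: "b \<in> Pos" unfolding b_def s_def by (rule sref_pos[OF i g ne])
  have eq: "w \<circ> s \<circ> sref b = w \<circ> sref g \<circ> s"
    unfolding b_def s_def using conj_simple[OF i, of g] by (simp add: comp_assoc)
  have v: "w \<circ> s \<in> W" unfolding s_def by (rule W_sref[OF w base_in[OF i]])
  have vb: "(w \<circ> s) b = w g" unfolding b_def s_def using n by simp
  note Lv = L_iff[OF v bP, unfolded vb]
  note Lw = L_iff[OF w g]
  have "L (w \<circ> sref g) < L w" using h by linarith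
  hence "- w g \<in> Pos" using Lw by blast
  hence "L (w \<circ> s \<circ> sref b) < L (w \<circ> s)" using Lv by blast
  hence "L (w \<circ> sref g \<circ> s) < L (w \<circ> s)" using eq by simp
  thus False using h down unfolding s_def by linarith
qed

lemma span_base_UNIV: "span (\<alpha> ` {1..r}) = UNIV"
proof -
  have "\<Phi> \<subseteq> span (\<alpha> ` {1..r})"
  proof
    fix b assume "b \<in> \<Phi>"
    then obtain k where k: "b = (\<Sum>i=1..r. of_int (k i) *\<^sub>R \<alpha> i)" using base_decomp by blast
    show "b \<in> span (\<alpha> ` {1..r})" unfolding k
      by (intro span_sum span_scale span_base) auto
  qed
  hence "span \<Phi> \<subseteq> span (\<alpha> ` {1..r})" by (rule span_minimal) (rule subspace_span)
  thus ?thesis using RS by (auto simp: root_system_def)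
qed

lemma fw_unique:
  assumes h1: "\<forall>j\<in>{1..r}. \<omega> \<bullet> coroot (\<alpha> j) = f j" and h2: "\<forall>j\<in>{1..r}. \<omega>' \<bullet> coroot (\<alpha> j) = f j"
  shows "\<omega> = \<omega>'"
proof -
  define d where "d = \<omega> - \<omega>'"
  have "orthogonal d y" if y: "y \<in> \<alpha> ` {1..r}" for y
  proof -
    obtain j where j: "j \<in> {1..r}" "y = \<alpha> j" using y by blast
    have "d \<bullet> coroot (\<alpha> j) = 0" using h1 h2 j(1) by (simp add: d_def inner_diff_left)
    hence "(2 / (\<alpha> j \<bullet> \<alpha> j)) * (d \<bullet> \<alpha> j) = 0" by (simp add: coroot_def)
    hence "d \<bullet> \<alpha> j = 0" using nz[OF base_in[OF j(1)]] by simp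
    thus ?thesis using j(2) by (simp add: orthogonal_def)
  qed
  hence "orthogonal d d" using orthogonal_to_span[of d "\<alpha> ` {1..r}" d] span_base_UNIV by blast
  thus ?thesis by (simp add: d_def orthogonal_def)
qed

lemma fw_ex:
  assumes k: "k \<in> {1..r}"
  shows "\<exists>\<omega>. \<forall>j\<in>{1..r}. \<omega> \<bullet> coroot (\<alpha> j) = (if k = j then 1 else 0)"
proof
  define B where "B = \<alpha> ` {1..r}"
  have iB: "independent B" and sB: "span B = UNIV" using base_indep span_base_UNIV by (auto simp: B_def)
  define \<phi> where "\<phi> x = (\<alpha> k \<bullet> \<alpha> k / 2) * representation B x (\<alpha> k)" for x
  have lin: "linear \<phi>"
  proof (rule linearI)
    fix x y show "\<phi> (x + y) = \<phi> x + \<phi> y"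
      unfolding \<phi>_def using sB by (simp add: representation_add[OF iB] algebra_simps)
  next
    fix c x show "\<phi> (c *\<^sub>R x) = c *\<^sub>R \<phi> x"
      unfolding \<phi>_def using sB by (simp add: representation_scale[OF iB])
  qed
  define \<omega> where "\<omega> = adjoint \<phi> 1"
  have om: "\<omega> \<bullet> x = \<phi> x" for x
    using adjoint_works[OF lin, of x 1] by (simp add: \<omega>_def inner_commute)
  show "\<forall>j\<in>{1..r}. \<omega> \<bullet> coroot (\<alpha> j) = (if k = j then 1 else 0)"
  proof
    fix j assume j: "j \<in> {1..r}"
    have e1: "\<omega> \<bullet> coroot (\<alpha> j) = (2 / (\<alpha> j \<bullet> \<alpha> j)) * \<phi> (\<alpha> j)"
      by (simp add: coroot_def om[symmetric])
    have "representation B (\<alpha> j) (\<alpha> k) = (if \<alpha> k = \<alpha> j then 1 else 0)"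
      using representation_basis[OF iB, of "\<alpha> j"] j by (simp add: B_def)
    moreover have "(\<alpha> k = \<alpha> j) = (k = j)" using inj_onD[OF base_inj _ k j] by blast
    ultimately have e2: "representation B (\<alpha> j) (\<alpha> k) = (if k = j then 1 else 0)" by simp
    show "\<omega> \<bullet> coroot (\<alpha> j) = (if k = j then 1 else 0)"
      using e1 e2 nz[OF base_in[OF j]] by (simp add: \<phi>_def)
  qed
qed

lemma fund_weight_prop:
  assumes k: "k \<in> {1..r}" and j: "j \<in> {1..r}"
  shows "fund_weight \<alpha> r k \<bullet> coroot (\<alpha> j) = (if k = j then 1 else 0)"
proof -
  obtain \<omega> where h: "\<forall>j\<in>{1..r}. \<omega> \<bullet> coroot (\<alpha> j) = (if k = j then 1 else 0)"
    using fw_ex[OF k] by blast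
  have "\<exists>!\<omega>. \<forall>j\<in>{1..r}. \<omega> \<bullet> coroot (\<alpha> j) = (if k = j then 1 else 0)"
  proof (rule ex1I[of _ \<omega>])
    show "\<forall>j\<in>{1..r}. \<omega> \<bullet> coroot (\<alpha> j) = (if k = j then 1 else 0)" by (rule h)
  next
    fix \<omega>' assume "\<forall>j\<in>{1..r}. \<omega>' \<bullet> coroot (\<alpha> j) = (if k = j then 1 else 0)"
    thus "\<omega>' = \<omega>" by (rule fw_unique[OF _ h])
  qed
  from theI'[OF this] show ?thesis using j unfolding fund_weight_def by blast
qed

lemma rho_simple: assumes i: "i \<in> {1..r}" shows "rho \<alpha> r \<bullet> coroot (\<alpha> i) = 1"
proof -
  have "rho \<alpha> r \<bullet> coroot (\<alpha> i) = (\<Sum>k=1..r. fund_weight \<alpha> r k \<bullet> coroot (\<alpha> i))"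
    by (simp add: rho_def inner_sum_left)
  also have "\<dots> = (\<Sum>k=1..r. if k = i then 1 else 0)"
    by (rule sum.cong[OF refl]) (rule fund_weight_prop[OF _ i])
  also have "\<dots> = 1" using i by simp
  finally show ?thesis .
qed

section \<open>Operator computations\<close>

abbreviation "kap \<equiv> 1 / coxeter_number \<Phi> \<alpha> r"
abbreviation "pp b \<equiv> rho \<alpha> r \<bullet> coroot b"

definition sg :: "'a \<Rightarrow> 'a coeff" where "sg b = (if b \<in> Pos then 1 else -1)"

lemma W_lin: "w \<in> W \<Longrightarrow> linear w" using W_orth orth_linear by blast

lemma Xop_cb': "finite W \<Longrightarrow> v \<in> W \<Longrightarrow> Xop \<Phi> \<alpha> r \<mu> (cbasis c v) = cbasis (c * xm kap v \<mu>) v"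
  using Xop_cb[where \<Phi>=\<Phi> and v=v and \<alpha>=\<alpha> and r=r and \<mu>=\<mu> and c=c] by (simp add: xm_def)

lemma Rop_cb:
  assumes fW: "finite W" and v: "v \<in> W" and b: "b \<in> \<Phi>"
  shows "Rop \<Phi> \<alpha> r b (cbasis c v) = cbasis (c * xm kap v b) v
     + (if L (v \<circ> sref b) + 1 = L v then cbasis (sg b * c * xm kap v (- (pp b *\<^sub>R b))) (v \<circ> sref b) else 0)"
proof -
  have vb: "v \<circ> sref b \<in> W" using W_sref[OF v b] .
  have "sref b (pp b *\<^sub>R b) = - (pp b *\<^sub>R b)"
    using linear_cmul[OF linear_sref, of b "pp b" b] sref_self[OF nz[OF b]] by simp
  hence ex: "xm kap (v \<circ> sref b) (pp b *\<^sub>R b) = xm kap v (- (pp b *\<^sub>R b))"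
    by (simp add: xm_comp)
  have R: "Rop \<Phi> \<alpha> r b (cbasis c v) = Xop \<Phi> \<alpha> r b (cbasis c v) + Xop \<Phi> \<alpha> r (pp b *\<^sub>R b) (Bop \<Phi> \<alpha> r b (cbasis c v))"
    by (simp add: Rop_def)
  show ?thesis
  proof (cases "b \<in> Pos")
    case True
    have "Bop \<Phi> \<alpha> r b (cbasis c v) = (if L (v \<circ> sref b) + 1 = L v then cbasis c (v \<circ> sref b) else 0)"
      using True by (simp add: Bop_def Bpos_cb[OF fW v])
    then show ?thesis unfolding R using True ex
      by (simp add: rep_if_app[OF rep_Xop] Xop_cb'[OF fW v] Xop_cb'[OF fW vb] sg_def)
  next
    case False
    have "Bop \<Phi> \<alpha> r b (cbasis c v) = - (if L (v \<circ> sref b) + 1 = L v then cbasis c (v \<circ> sref b) else 0)"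
      using False by (simp add: Bop_def Bpos_cb[OF fW v])
    then show ?thesis unfolding R using False ex
      by (simp add: rep_neg_app[OF rep_Xop] rep_if_app[OF rep_Xop] Xop_cb'[OF fW v] Xop_cb'[OF fW vb] sg_def cb_neg)
  qed
qed

lemma Top_cb':
  assumes fW: "finite W" and v: "v \<in> W" and i: "i \<in> {1..r}"
  shows "Top \<Phi> \<alpha> r i (cbasis c v) = (if L (v \<circ> sref (\<alpha> i)) = L v + 1 then cbasis c (v \<circ> sref (\<alpha> i)) else cbasis c v)"
  using Top_cb[OF fW v, where \<alpha>=\<alpha> and r=r and i=i and c=c] L_up_iff(3)[OF v i] by auto

lemma neg_simple_notpos: "i \<in> {1..r} \<Longrightarrow> - \<alpha> i \<notin> Pos"
  using not_both a_pos by blast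

lemma pp_simple: "i \<in> {1..r} \<Longrightarrow> pp (\<alpha> i) = 1" by (rule rho_simple)
lemma pp_neg: "pp (- b) = - pp b" by simp

lemma Q_cb:
  assumes fW: "finite W" and v: "v \<in> W" and i: "i \<in> {1..r}"
  shows "Top \<Phi> \<alpha> r i (Rop \<Phi> \<alpha> r (- \<alpha> i) (cbasis c v))
     = (if L (v \<circ> sref (\<alpha> i)) = L v + 1 then cbasis (c * xm kap v (- \<alpha> i)) (v \<circ> sref (\<alpha> i)) else 0)"
proof -
  define s where "s = sref (\<alpha> i)"
  have a0: "\<alpha> i \<noteq> 0" using nz[OF base_in[OF i]] .
  have vs: "v \<circ> s \<in> W" unfolding s_def using W_sref[OF v base_in[OF i]] .
  have vss: "v \<circ> s \<circ> s = v" unfolding s_def using sref_comp_sref[OF a0] by (simp add: comp_assoc)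
  have sgn: "sg (- \<alpha> i) = -1" using neg_simple_notpos[OF i] by (simp add: sg_def)
  have ppn: "- (pp (- \<alpha> i) *\<^sub>R - \<alpha> i) = - \<alpha> i" using pp_simple[OF i] by simp
  have R: "Rop \<Phi> \<alpha> r (- \<alpha> i) (cbasis c v) = cbasis (c * xm kap v (- \<alpha> i)) v
     + (if L (v \<circ> s) + 1 = L v then cbasis (- (c * xm kap v (- \<alpha> i))) (v \<circ> s) else 0)"
    using Rop_cb[OF fW v neg_in[OF base_in[OF i]], of c] sgn ppn unfolding s_def by simp
  note LL = L_up_iff(3)[OF v i, folded s_def]
  show ?thesis
  proof (cases "L (v \<circ> s) = L v + 1")
    case True
    hence nd: "\<not> (L (v \<circ> s) + 1 = L v)" by simp
    show ?thesis unfolding R s_def[symmetric] using True nd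
      by (simp add: rep_add_app[OF rep_Top] Top_cb'[OF fW v i, folded s_def])
  next
    case False
    hence d: "L (v \<circ> s) + 1 = L v" using LL by simp
    have up2: "L (v \<circ> s \<circ> s) = L (v \<circ> s) + 1" using d vss by simp
    show ?thesis unfolding R s_def[symmetric] using False d
      by (simp add: rep_add_app[OF rep_Top] Top_cb'[OF fW v i, folded s_def] Top_cb'[OF fW vs i, folded s_def] up2 vss cb_add cb_zero)
  qed
qed

lemma part_a_cb:
  assumes fW: "finite W" and w: "w \<in> W" and i: "i \<in> {1..r}"
  shows "Rop \<Phi> \<alpha> r (\<alpha> i) (Top \<Phi> \<alpha> r i (cbasis 1 w))
     = Top \<Phi> \<alpha> r i (Rop \<Phi> \<alpha> r (- \<alpha> i) (cbasis 1 w)) + Rop \<Phi> \<alpha> r (\<alpha> i) (cbasis 1 w)"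
proof -
  define s where "s = sref (\<alpha> i)"
  have a0: "\<alpha> i \<noteq> 0" using nz[OF base_in[OF i]] .
  have aP: "\<alpha> i \<in> \<Phi>" using base_in[OF i] .
  have ws: "w \<circ> s \<in> W" unfolding s_def using W_sref[OF w aP] .
  have wss: "w \<circ> s \<circ> s = w" unfolding s_def using sref_comp_sref[OF a0] by (simp add: comp_assoc)
  have sa: "s (\<alpha> i) = - \<alpha> i" unfolding s_def by (rule sref_self[OF a0])
  have sna: "s (- \<alpha> i) = \<alpha> i" unfolding s_def by (simp only: linear_neg[OF linear_sref] sref_self[OF a0] minus_minus)
  have sga: "sg (\<alpha> i) = 1" using a_pos[OF i] by (simp add: sg_def)
  have ppa: "pp (\<alpha> i) = 1" by (rule pp_simple[OF i])
  note LL = L_up_iff(3)[OF w i, folded s_def]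
  note Q = Q_cb[OF fW w i, folded s_def]
  note Tw = Top_cb'[OF fW w i, folded s_def]
  note Ra = Rop_cb[OF fW _ aP, folded s_def]
  show ?thesis
  proof (cases "L (w \<circ> s) = L w + 1")
    case True
    hence nd: "\<not> (L (w \<circ> s) + 1 = L w)" by simp
    have c2: "L (w \<circ> s \<circ> s) + 1 = L (w \<circ> s)" using True wss by simp
    show ?thesis
      using True nd c2 by (simp add: Q Tw Ra[OF w] Ra[OF ws] wss sga ppa xm_comp sa sna add.commute)
  next
    case False
    show ?thesis using False by (simp add: Q Tw)
  qed
qed

lemma part_b_cb:
  assumes fW: "finite W" and w: "w \<in> W" and i: "i \<in> {1..r}"
  shows "Rop \<Phi> \<alpha> r (- \<alpha> i) (Top \<Phi> \<alpha> r i (cbasis 1 w))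
     = Top \<Phi> \<alpha> r i (Rop \<Phi> \<alpha> r (\<alpha> i) (cbasis 1 w)) - Rop \<Phi> \<alpha> r (\<alpha> i) (cbasis 1 w)"
proof -
  define s where "s = sref (\<alpha> i)"
  have a0: "\<alpha> i \<noteq> 0" using nz[OF base_in[OF i]] .
  have aP: "\<alpha> i \<in> \<Phi>" using base_in[OF i] .
  have naP: "- \<alpha> i \<in> \<Phi>" using neg_in[OF aP] .
  have ws: "w \<circ> s \<in> W" unfolding s_def using W_sref[OF w aP] .
  have wss: "w \<circ> s \<circ> s = w" unfolding s_def using sref_comp_sref[OF a0] by (simp add: comp_assoc)
  have sa: "s (\<alpha> i) = - \<alpha> i" unfolding s_def by (rule sref_self[OF a0])
  have sna: "s (- \<alpha> i) = \<alpha> i" unfolding s_def by (simp only: linear_neg[OF linear_sref] sref_self[OF a0] minus_minus)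
  have sga: "sg (\<alpha> i) = 1" using a_pos[OF i] by (simp add: sg_def)
  have sgn: "sg (- \<alpha> i) = -1" using neg_simple_notpos[OF i] by (simp add: sg_def)
  have ppa: "pp (\<alpha> i) = 1" by (rule pp_simple[OF i])
  have ppn: "- (pp (- \<alpha> i) *\<^sub>R - \<alpha> i) = - \<alpha> i" using ppa by simp
  note LL = L_up_iff(3)[OF w i, folded s_def]
  note Tw = Top_cb'[OF fW w i, folded s_def]
  note Tws = Top_cb'[OF fW ws i, folded s_def]
  note Ra = Rop_cb[OF fW _ aP, folded s_def]
  note Rn = Rop_cb[OF fW _ naP, unfolded sref_neg, folded s_def]
  have TA: "Top \<Phi> \<alpha> r i (F + G) = Top \<Phi> \<alpha> r i F + Top \<Phi> \<alpha> r i G" for F G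
    by (rule rep_add_app[OF rep_Top])
  show ?thesis
  proof (cases "L (w \<circ> s) = L w + 1")
    case True
    hence nd: "\<not> (L (w \<circ> s) + 1 = L w)" by simp
    have c2: "L (w \<circ> s \<circ> s) + 1 = L (w \<circ> s)" using True wss by simp
    have l: "Rop \<Phi> \<alpha> r (- \<alpha> i) (Top \<Phi> \<alpha> r i (cbasis 1 w)) = cbasis (xm kap w (\<alpha> i)) (w \<circ> s) + cbasis (- xm kap w (\<alpha> i)) w"
      using True c2 by (simp add: Tw Rn[OF ws] wss sgn ppa xm_comp sna)
    have rr: "Top \<Phi> \<alpha> r i (Rop \<Phi> \<alpha> r (\<alpha> i) (cbasis 1 w)) - Rop \<Phi> \<alpha> r (\<alpha> i) (cbasis 1 w)
       = cbasis (xm kap w (\<alpha> i)) (w \<circ> s) - cbasis (xm kap w (\<alpha> i)) w"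
      using True nd by (simp add: Tw Ra[OF w])
    show ?thesis unfolding l rr by (simp only: cb_neg[symmetric] add_uminus_conv_diff)
  next
    case False
    hence d: "L (w \<circ> s) + 1 = L w" using LL by simp
    have up2: "L (w \<circ> s \<circ> s) = L (w \<circ> s) + 1" using d wss by simp
    have l: "Rop \<Phi> \<alpha> r (- \<alpha> i) (Top \<Phi> \<alpha> r i (cbasis 1 w)) = cbasis (xm kap w (- \<alpha> i)) w + cbasis (- xm kap w (- \<alpha> i)) (w \<circ> s)"
      using False d by (simp add: Tw Rn[OF w] sgn ppa)
    have ra: "Rop \<Phi> \<alpha> r (\<alpha> i) (cbasis 1 w) = cbasis (xm kap w (\<alpha> i)) w + cbasis (xm kap w (- \<alpha> i)) (w \<circ> s)"
      using d by (simp add: Ra[OF w] sga ppa)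
    have ta: "Top \<Phi> \<alpha> r i (Rop \<Phi> \<alpha> r (\<alpha> i) (cbasis 1 w)) = cbasis (xm kap w (\<alpha> i)) w + cbasis (xm kap w (- \<alpha> i)) w"
      unfolding ra TA using False up2 by (simp add: Tw Tws wss)
    have g: "(A + B) - (A + C) = B + - C" for A B C :: "'a kmod" by (simp add: algebra_simps)
    show ?thesis unfolding l ta unfolding ra unfolding g by (simp only: cb_neg)
  qed
qed

lemma sg_refl:
  assumes i: "i \<in> {1..r}" and b: "b \<in> \<Phi>" and n1: "b \<noteq> \<alpha> i" and n2: "b \<noteq> - \<alpha> i"
  shows "sg (sref (\<alpha> i) b) = sg b"
proof (cases "b \<in> Pos")
  case True
  thus ?thesis using sref_pos[OF i True n1] by (simp add: sg_def)
next
  case False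
  hence nb: "- b \<in> Pos" using pos_or_neg[OF b] by blast
  have "- sref (\<alpha> i) b \<in> Pos" by (rule sref_neg_pos[OF i nb n2])
  hence "sref (\<alpha> i) b \<notin> Pos" using not_both by blast
  thus ?thesis using False by (simp add: sg_def)
qed

lemma pp_refl:
  assumes i: "i \<in> {1..r}"
  shows "pp (sref (\<alpha> i) g) = pp g - coroot g \<bullet> \<alpha> i"
proof -
  have a0: "\<alpha> i \<noteq> 0" using nz[OF base_in[OF i]] .
  have "coroot (sref (\<alpha> i) g) = sref (\<alpha> i) (coroot g)" by (rule orth_coroot[OF orth_sref[OF a0]])
  hence "pp (sref (\<alpha> i) g) = pp g - (coroot g \<bullet> coroot (\<alpha> i)) * (rho \<alpha> r \<bullet> \<alpha> i)"
    by (simp add: sref_def inner_diff_right)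
  also have "(coroot g \<bullet> coroot (\<alpha> i)) * (rho \<alpha> r \<bullet> \<alpha> i) = (coroot g \<bullet> \<alpha> i) * pp (\<alpha> i)"
    by (simp add: coroot_def mult_ac)
  finally show ?thesis using pp_simple[OF i] by simp
qed

lemma K1':
  assumes w: "w \<in> W" and i: "i \<in> {1..r}" and g: "g \<in> \<Phi>" and n1: "g \<noteq> \<alpha> i" and n2: "g \<noteq> - \<alpha> i"
    and up: "L (w \<circ> sref (\<alpha> i)) = L w + 1"
  shows "L (w \<circ> sref (\<alpha> i) \<circ> sref (sref (\<alpha> i) g)) + 1 = L (w \<circ> sref (\<alpha> i))
     \<longleftrightarrow> L (w \<circ> sref g) + 1 = L w \<and> L (w \<circ> sref g \<circ> sref (\<alpha> i)) = L (w \<circ> sref g) + 1"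
proof (cases "g \<in> Pos")
  case True thus ?thesis using K1[OF w i True n1 up] by simp
next
  case False
  hence nb: "- g \<in> Pos" using pos_or_neg[OF g] by blast
  have n1': "- g \<noteq> \<alpha> i" using n2 by (metis minus_minus)
  have e: "sref (sref (\<alpha> i) (- g)) = sref (sref (\<alpha> i) g)"
    by (simp only: linear_neg[OF linear_sref] sref_neg)
  show ?thesis using K1[OF w i nb n1' up] unfolding e sref_neg .
qed

lemma K2':
  assumes w: "w \<in> W" and i: "i \<in> {1..r}" and g: "g \<in> \<Phi>" and n1: "g \<noteq> \<alpha> i" and n2: "g \<noteq> - \<alpha> i"
    and down: "L (w \<circ> sref (\<alpha> i)) + 1 = L w"
  shows "\<not> (L (w \<circ> sref g) + 1 = L w \<and> L (w \<circ> sref g \<circ> sref (\<alpha> i)) = L (w \<circ> sref g) + 1)"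
proof (cases "g \<in> Pos")
  case True thus ?thesis using K2[OF w i True n1 down] by simp
next
  case False
  hence nb: "- g \<in> Pos" using pos_or_neg[OF g] by blast
  have n1': "- g \<noteq> \<alpha> i" using n2 by (metis minus_minus)
  show ?thesis using K2[OF w i nb n1' down] unfolding sref_neg .
qed

lemma vec_id:
  assumes "pb = pg - coroot g \<bullet> a"
  shows "a + - (pg *\<^sub>R g) + sref g (- a) = - (pb *\<^sub>R g)"
proof -
  have "a + - (pg *\<^sub>R g) + sref g (- a) = - ((pg - (a \<bullet> coroot g)) *\<^sub>R g)"
    by (simp add: sref_def algebra_simps)
  also have "pg - (a \<bullet> coroot g) = pb" using assms by (simp add: inner_commute)
  finally show ?thesis .
qed

lemma xm3: "linear v \<Longrightarrow> xm k v x * xm k v y * xm k v z = xm k v (x + y + z)"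
  by (simp add: xm_mult)

lemma part_c_cb:
  assumes fW: "finite W" and w: "w \<in> W" and i: "i \<in> {1..r}"
    and b: "b \<in> \<Phi>" and n1: "b \<noteq> \<alpha> i" and n2: "b \<noteq> - \<alpha> i"
  shows "Rop \<Phi> \<alpha> r b (Top \<Phi> \<alpha> r i (cbasis 1 w))
     = Top \<Phi> \<alpha> r i (Rop \<Phi> \<alpha> r (- \<alpha> i) (Rop \<Phi> \<alpha> r (sref (\<alpha> i) b) (Rop \<Phi> \<alpha> r (\<alpha> i) (cbasis 1 w))))"
proof -
  define s where "s = sref (\<alpha> i)"
  define g where "g = s b"
  have a0: "\<alpha> i \<noteq> 0" using nz[OF base_in[OF i]] .
  have aP: "\<alpha> i \<in> \<Phi>" using base_in[OF i] .
  have ws: "w \<circ> s \<in> W" unfolding s_def using W_sref[OF w aP] .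
  have wss: "w \<circ> s \<circ> s = w" unfolding s_def using sref_comp_sref[OF a0] by (simp add: comp_assoc)
  have sa: "s (\<alpha> i) = - \<alpha> i" unfolding s_def by (rule sref_self[OF a0])
  have sna: "s (- \<alpha> i) = \<alpha> i" unfolding s_def by (simp only: linear_neg[OF linear_sref] sref_self[OF a0] minus_minus)
  have slin: "linear s" unfolding s_def by (rule linear_sref)
  have sga: "sg (\<alpha> i) = 1" using a_pos[OF i] by (simp add: sg_def)
  have ppa: "pp (\<alpha> i) = 1" by (rule pp_simple[OF i])
  have gP: "g \<in> \<Phi>" unfolding g_def s_def by (rule sref_in[OF aP b])
  have sg_b: "s g = b" unfolding g_def s_def using a0 by simp
  have gn1: "g \<noteq> \<alpha> i" using n2 sg_b sa by auto
  have gn2: "g \<noteq> - \<alpha> i" using n1 sg_b sna by auto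
  have sgg: "sg g = sg b" unfolding g_def s_def by (rule sg_refl[OF i b n1 n2])
  have ppb: "pp b = pp g - coroot g \<bullet> \<alpha> i" using pp_refl[OF i, of g] sg_b unfolding s_def by simp
  have conjb: "sref b = s \<circ> sref g \<circ> s" using sref_conj[OF a0, of g] sg_b unfolding s_def by simp
  have wlin: "linear w" by (rule W_lin[OF w])
  have wg: "w \<circ> sref g \<in> W" by (rule W_sref[OF w gP])
  have wsg: "w \<circ> s \<circ> sref g \<in> W" by (rule W_sref[OF ws gP])
  have QA: "Top \<Phi> \<alpha> r i (Rop \<Phi> \<alpha> r (- \<alpha> i) (F + G))
      = Top \<Phi> \<alpha> r i (Rop \<Phi> \<alpha> r (- \<alpha> i) F) + Top \<Phi> \<alpha> r i (Rop \<Phi> \<alpha> r (- \<alpha> i) G)" for F G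
    by (simp only: rep_add_app[OF rep_Rop] rep_add_app[OF rep_Top])
  have QI: "Top \<Phi> \<alpha> r i (Rop \<Phi> \<alpha> r (- \<alpha> i) (if C then F else 0))
      = (if C then Top \<Phi> \<alpha> r i (Rop \<Phi> \<alpha> r (- \<alpha> i) F) else 0)" for C F
    by (simp only: rep_if_app[OF rep_Rop] rep_if_app[OF rep_Top])
  have RA: "Rop \<Phi> \<alpha> r g (F + G) = Rop \<Phi> \<alpha> r g F + Rop \<Phi> \<alpha> r g G" for F G
    by (rule rep_add_app[OF rep_Rop])
  note Q = Q_cb[OF fW _ i, folded s_def]
  note LL = L_up_iff(3)[OF w i, folded s_def]
  note Tw = Top_cb'[OF fW w i, folded s_def]
  note Ra = Rop_cb[OF fW w aP, folded s_def]
  note Rg = Rop_cb[OF fW _ gP]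
  note Rb = Rop_cb[OF fW _ b]
  have gdef: "sref (\<alpha> i) b = g" unfolding g_def s_def ..
  show ?thesis
  proof (cases "L (w \<circ> s) = L w + 1")
    case True
    hence nd: "\<not> (L (w \<circ> s) + 1 = L w)" by simp
    have ra: "Rop \<Phi> \<alpha> r (\<alpha> i) (cbasis 1 w) = cbasis (xm kap w (\<alpha> i)) w"
      using nd by (simp add: Ra)
    have rhs: "Top \<Phi> \<alpha> r i (Rop \<Phi> \<alpha> r (- \<alpha> i) (Rop \<Phi> \<alpha> r g (cbasis (xm kap w (\<alpha> i)) w)))
      = cbasis (xm kap w (\<alpha> i) * xm kap w g * xm kap w (- \<alpha> i)) (w \<circ> s)
       + (if L (w \<circ> sref g) + 1 = L w then
          (if L (w \<circ> sref g \<circ> s) = L (w \<circ> sref g) + 1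
           then cbasis (sg g * xm kap w (\<alpha> i) * xm kap w (- (pp g *\<^sub>R g)) * xm kap (w \<circ> sref g) (- \<alpha> i)) (w \<circ> sref g \<circ> s)
           else 0) else 0)"
      unfolding Rg[OF w] QA QI using True by (simp add: Q[OF w] Q[OF wg])
    have lhs: "Rop \<Phi> \<alpha> r b (Top \<Phi> \<alpha> r i (cbasis 1 w))
      = cbasis (xm kap (w \<circ> s) b) (w \<circ> s)
       + (if L (w \<circ> s \<circ> sref b) + 1 = L (w \<circ> s)
          then cbasis (sg b * xm kap (w \<circ> s) (- (pp b *\<^sub>R b))) (w \<circ> s \<circ> sref b) else 0)"
      using True by (simp add: Tw Rb[OF ws])
    have e1: "xm kap w (\<alpha> i) * xm kap w g * xm kap w (- \<alpha> i) = xm kap (w \<circ> s) b"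
      by (simp add: xm3[OF wlin] xm_comp g_def)
    have "sg g * xm kap w (\<alpha> i) * xm kap w (- (pp g *\<^sub>R g)) * xm kap (w \<circ> sref g) (- \<alpha> i)
        = sg g * (xm kap w (\<alpha> i) * xm kap w (- (pp g *\<^sub>R g)) * xm kap w (sref g (- \<alpha> i)))"
      by (simp add: xm_comp mult.assoc)
    also have "\<dots> = sg b * xm kap w (- (pp b *\<^sub>R g))"
      by (simp only: xm3[OF wlin] vec_id[OF ppb] sgg)
    also have "xm kap w (- (pp b *\<^sub>R g)) = xm kap (w \<circ> s) (- (pp b *\<^sub>R b))"
      by (simp add: xm_comp linear_neg[OF slin] linear_cmul[OF slin] g_def)
    finally have e2: "sg g * xm kap w (\<alpha> i) * xm kap w (- (pp g *\<^sub>R g)) * xm kap (w \<circ> sref g) (- \<alpha> i)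
        = sg b * xm kap (w \<circ> s) (- (pp b *\<^sub>R b))" .
    have ss: "s \<circ> s = id" unfolding s_def by (rule sref_comp_sref[OF a0])
    have "w \<circ> s \<circ> (s \<circ> sref g \<circ> s) = w \<circ> (s \<circ> s) \<circ> sref g \<circ> s" by (simp only: comp_assoc)
    also have "\<dots> = w \<circ> sref g \<circ> s" by (simp only: ss comp_id)
    finally have idx: "w \<circ> s \<circ> sref b = w \<circ> sref g \<circ> s" unfolding conjb .
    have cond: "L (w \<circ> s \<circ> sref b) + 1 = L (w \<circ> s)
       \<longleftrightarrow> L (w \<circ> sref g) + 1 = L w \<and> L (w \<circ> sref g \<circ> s) = L (w \<circ> sref g) + 1"
      using K1'[OF w i gP gn1 gn2 True[unfolded s_def]] sg_b unfolding s_def by simp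
    show ?thesis unfolding gdef ra rhs lhs e1 e2 unfolding cond unfolding idx by simp
  next
    case False
    hence d: "L (w \<circ> s) + 1 = L w" using LL by simp
    have up2: "L (w \<circ> s \<circ> s) = L (w \<circ> s) + 1" using d wss by simp
    have ra: "Rop \<Phi> \<alpha> r (\<alpha> i) (cbasis 1 w) = cbasis (xm kap w (\<alpha> i)) w + cbasis (xm kap w (- \<alpha> i)) (w \<circ> s)"
      using d by (simp add: Ra sga ppa)
    have k2: "\<not> (L (w \<circ> sref g) + 1 = L w \<and> L (w \<circ> sref g \<circ> s) = L (w \<circ> sref g) + 1)"
      using K2'[OF w i gP gn1 gn2 d[unfolded s_def]] unfolding s_def .
    have q1: "Top \<Phi> \<alpha> r i (Rop \<Phi> \<alpha> r (- \<alpha> i) (Rop \<Phi> \<alpha> r g (cbasis (xm kap w (\<alpha> i)) w))) = 0"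
      unfolding Rg[OF w] QA QI using False k2 by (simp add: Q[OF w] Q[OF wg])
    have q2: "Top \<Phi> \<alpha> r i (Rop \<Phi> \<alpha> r (- \<alpha> i) (Rop \<Phi> \<alpha> r g (cbasis (xm kap w (- \<alpha> i)) (w \<circ> s))))
      = cbasis (xm kap w (- \<alpha> i) * xm kap (w \<circ> s) g * xm kap (w \<circ> s) (- \<alpha> i)) (w \<circ> s \<circ> s)
       + (if L (w \<circ> s \<circ> sref g) + 1 = L (w \<circ> s) then
          (if L (w \<circ> s \<circ> sref g \<circ> s) = L (w \<circ> s \<circ> sref g) + 1
           then cbasis (sg g * xm kap w (- \<alpha> i) * xm kap (w \<circ> s) (- (pp g *\<^sub>R g)) * xm kap (w \<circ> s \<circ> sref g) (- \<alpha> i)) (w \<circ> s \<circ> sref g \<circ> s)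
           else 0) else 0)"
      unfolding Rg[OF ws] QA QI using up2 by (simp add: Q[OF ws] Q[OF wsg])
    have lhs: "Rop \<Phi> \<alpha> r b (Top \<Phi> \<alpha> r i (cbasis 1 w))
      = cbasis (xm kap w b) w
       + (if L (w \<circ> sref b) + 1 = L w
          then cbasis (sg b * xm kap w (- (pp b *\<^sub>R b))) (w \<circ> sref b) else 0)"
      using False by (simp add: Tw Rb[OF w])
    have e3: "xm kap w (- \<alpha> i) * xm kap (w \<circ> s) g * xm kap (w \<circ> s) (- \<alpha> i) = xm kap w b"
      by (simp add: xm3[OF wlin] xm_comp sg_b sna)
    have "sg g * xm kap w (- \<alpha> i) * xm kap (w \<circ> s) (- (pp g *\<^sub>R g)) * xm kap (w \<circ> s \<circ> sref g) (- \<alpha> i)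
        = sg g * (xm kap w (s (\<alpha> i)) * xm kap w (s (- (pp g *\<^sub>R g))) * xm kap w (s (sref g (- \<alpha> i))))"
      by (simp add: xm_comp mult.assoc sa)
    also have "\<dots> = sg b * xm kap w (s (\<alpha> i + - (pp g *\<^sub>R g) + sref g (- \<alpha> i)))"
      by (simp only: xm3[OF wlin] linear_add[OF slin] sgg)
    also have "\<dots> = sg b * xm kap w (- (pp b *\<^sub>R b))"
      by (simp only: vec_id[OF ppb] linear_neg[OF slin] linear_cmul[OF slin] sg_b)
    finally have e4: "sg g * xm kap w (- \<alpha> i) * xm kap (w \<circ> s) (- (pp g *\<^sub>R g)) * xm kap (w \<circ> s \<circ> sref g) (- \<alpha> i)
        = sg b * xm kap w (- (pp b *\<^sub>R b))" .
    have idx: "w \<circ> s \<circ> sref g \<circ> s = w \<circ> sref b"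
      unfolding conjb by (simp add: comp_assoc)
    have cond: "L (w \<circ> sref b) + 1 = L w
       \<longleftrightarrow> L (w \<circ> s \<circ> sref g) + 1 = L (w \<circ> s) \<and> L (w \<circ> s \<circ> sref g \<circ> s) = L (w \<circ> s \<circ> sref g) + 1"
      using K1'[OF ws[unfolded s_def] i gP gn1 gn2 up2[unfolded s_def]] sg_b wss unfolding s_def by simp
    show ?thesis unfolding gdef ra RA QA q1 q2 lhs e3 e4 unfolding cond unfolding idx wss by simp
  qed
qed

end

theorem proposition11p4:
  fixes \<Phi> :: "'a::euclidean_space set" and \<alpha> :: "nat \<Rightarrow> 'a" and r i :: nat and \<beta> :: 'a
  assumes "root_system \<Phi>" and "irreducible_rs \<Phi>" and "is_base \<Phi> \<alpha> r"
    and "i \<in> {1..r}" and "\<beta> \<in> \<Phi>"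
  shows "(Rop \<Phi> \<alpha> r (\<alpha> i) \<circ> Top \<Phi> \<alpha> r i
           = (Top \<Phi> \<alpha> r i \<circ> Rop \<Phi> \<alpha> r (- \<alpha> i)) + Rop \<Phi> \<alpha> r (\<alpha> i))
       \<and> (Rop \<Phi> \<alpha> r (- \<alpha> i) \<circ> Top \<Phi> \<alpha> r i
           = (Top \<Phi> \<alpha> r i \<circ> Rop \<Phi> \<alpha> r (\<alpha> i)) - Rop \<Phi> \<alpha> r (\<alpha> i))
       \<and> (\<beta> \<noteq> \<alpha> i \<and> \<beta> \<noteq> - \<alpha> i \<longrightarrow>
         Rop \<Phi> \<alpha> r \<beta> \<circ> Top \<Phi> \<alpha> r i
           = Top \<Phi> \<alpha> r i \<circ> Rop \<Phi> \<alpha> r (- \<alpha> i) \<circ> Rop \<Phi> \<alpha> r (sref (\<alpha> i) \<beta>) \<circ> Rop \<Phi> \<alpha> r (\<alpha> i))"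
proof -
  interpret rs \<Phi> \<alpha> r using assms(1,3) by unfold_locales
  have i: "i \<in> {1..r}" by (rule assms(4))
  have A: "Rop \<Phi> \<alpha> r (\<alpha> i) \<circ> Top \<Phi> \<alpha> r i
           = (Top \<Phi> \<alpha> r i \<circ> Rop \<Phi> \<alpha> r (- \<alpha> i)) + Rop \<Phi> \<alpha> r (\<alpha> i)"
  proof (rule rep_eq)
    show "rep \<Phi> (Rop \<Phi> \<alpha> r (\<alpha> i) \<circ> Top \<Phi> \<alpha> r i)" by (intro rep_comp rep_Rop rep_Top)
    show "rep \<Phi> ((Top \<Phi> \<alpha> r i \<circ> Rop \<Phi> \<alpha> r (- \<alpha> i)) + Rop \<Phi> \<alpha> r (\<alpha> i))"
      by (intro rep_add rep_comp rep_Rop rep_Top)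
    assume fW: "finite (weyl_group \<Phi>)"
    show "\<forall>w\<in>weyl_group \<Phi>. (Rop \<Phi> \<alpha> r (\<alpha> i) \<circ> Top \<Phi> \<alpha> r i) (cbasis 1 w)
        = ((Top \<Phi> \<alpha> r i \<circ> Rop \<Phi> \<alpha> r (- \<alpha> i)) + Rop \<Phi> \<alpha> r (\<alpha> i)) (cbasis 1 w)"
      using part_a_cb[OF fW _ i] by simp
  qed
  have B: "Rop \<Phi> \<alpha> r (- \<alpha> i) \<circ> Top \<Phi> \<alpha> r i
           = (Top \<Phi> \<alpha> r i \<circ> Rop \<Phi> \<alpha> r (\<alpha> i)) - Rop \<Phi> \<alpha> r (\<alpha> i)"
  proof (rule rep_eq)
    show "rep \<Phi> (Rop \<Phi> \<alpha> r (- \<alpha> i) \<circ> Top \<Phi> \<alpha> r i)" by (intro rep_comp rep_Rop rep_Top)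
    show "rep \<Phi> ((Top \<Phi> \<alpha> r i \<circ> Rop \<Phi> \<alpha> r (\<alpha> i)) - Rop \<Phi> \<alpha> r (\<alpha> i))"
      by (intro rep_diff rep_comp rep_Rop rep_Top)
    assume fW: "finite (weyl_group \<Phi>)"
    show "\<forall>w\<in>weyl_group \<Phi>. (Rop \<Phi> \<alpha> r (- \<alpha> i) \<circ> Top \<Phi> \<alpha> r i) (cbasis 1 w)
        = ((Top \<Phi> \<alpha> r i \<circ> Rop \<Phi> \<alpha> r (\<alpha> i)) - Rop \<Phi> \<alpha> r (\<alpha> i)) (cbasis 1 w)"
      using part_b_cb[OF fW _ i] by (simp add: fun_diff_def)
  qed
  have C: "Rop \<Phi> \<alpha> r \<beta> \<circ> Top \<Phi> \<alpha> r i
           = Top \<Phi> \<alpha> r i \<circ> Rop \<Phi> \<alpha> r (- \<alpha> i) \<circ> Rop \<Phi> \<alpha> r (sref (\<alpha> i) \<beta>) \<circ> Rop \<Phi> \<alpha> r (\<alpha> i)"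
    if n: "\<beta> \<noteq> \<alpha> i" "\<beta> \<noteq> - \<alpha> i"
  proof (rule rep_eq)
    show "rep \<Phi> (Rop \<Phi> \<alpha> r \<beta> \<circ> Top \<Phi> \<alpha> r i)" by (intro rep_comp rep_Rop rep_Top)
    show "rep \<Phi> (Top \<Phi> \<alpha> r i \<circ> Rop \<Phi> \<alpha> r (- \<alpha> i) \<circ> Rop \<Phi> \<alpha> r (sref (\<alpha> i) \<beta>) \<circ> Rop \<Phi> \<alpha> r (\<alpha> i))"
      by (intro rep_comp rep_Rop rep_Top)
    assume fW: "finite (weyl_group \<Phi>)"
    show "\<forall>w\<in>weyl_group \<Phi>. (Rop \<Phi> \<alpha> r \<beta> \<circ> Top \<Phi> \<alpha> r i) (cbasis 1 w)
        = (Top \<Phi> \<alpha> r i \<circ> Rop \<Phi> \<alpha> r (- \<alpha> i) \<circ> Rop \<Phi> \<alpha> r (sref (\<alpha> i) \<beta>) \<circ> Rop \<Phi> \<alpha> r (\<alpha> i)) (cbasis 1 w)"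
      using part_c_cb[OF fW _ i assms(5) n] by simp
  qed
  show ?thesis using A B C by blast
qed

end
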